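(* Let $n\ge p\ge 1$ and $m\ge 1$. Let $\bm f:\mathbb{R}^d\to\mathbb{R}^p$ be a fixed feature map $\bm f(\bm x)=(f_1(\bm x),\dots,f_p(\bm x))'$. Let $\{(\bm x_i,y_i)\}_{i=1}^n$ (training set) and $\{(\bm u_i,v_i)\}_{i=1}^m$ (testing set) be two independent samples of i.i.d. rows from a common joint distribution of $(\bm x,y)\in\mathbb{R}^d\times\mathbb{R}$, such that, conditionally on the predictors, the responses are independent with $y\mid \bm x\sim\mathcal N(\bm f(\bm x)'\bm\beta,\sigma^2)$ for some $\bm\beta\in\mathbb{R}^p$ and $\sigma^2>0$. Let $\bm F_x$ be the $n\times p$ matrix with $i$-th row $\bm f(\bm x_i)'$ and $\bm F_u$ the $m\times p$ matrix with $i$-th row $\bm f(\bm u_i)'$, and assume $\bm F_x$ has rank $p$ almost surely. Let $\hat{\bm\beta}=(\bm F_x'\bm F_x)^{-1}\bm F_x'\bm y$ with $\bm y=(y_1,\dots,y_n)'$, and $$\widehat{\mathcal E}=\frac1m\sum_{i=1}^m\{v_i-\bm f(\bm u_i)'\hat{\bm\beta}\}^2 .$$ Let $\bm A=\frac{n}{m}(\bm F_x'\bm F_x)^{-1}\bm F_u'\bm F_u$, and assume the expectations and variances below are finite. Then $$E\{\widehat{\mathcal E}\}=\sigma^2\Big\{1+\tfrac1n E_{\bm X}\{\mathrm{tr}(\bm A)\}\Big\},$$ $$\mathrm{var}\{\widehat{\mathcal E}\}=\sigma^4\Big\{\tfrac2m+\tfrac{4}{mn}E_{\bm X}\{\mathrm{tr}(\bm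 A)\}+\tfrac{2}{n^2}E_{\bm X}\{\mathrm{tr}(\bm A^2)\}+\tfrac{1}{n^2}\mathrm{var}_{\bm X}\{\mathrm{tr}(\bm A)\}\Big\}.$$
   Context: $\bm X$ denotes the collection of all predictor values $\bm x_1,\dots,\bm x_n,\bm u_1,\dots,\bm u_m$; $E_{\bm X}$ and $\mathrm{var}_{\bm X}$ denote expectation and variance with respect to the distribution of these predictor values. $E\{\cdot\}$ and $\mathrm{var}\{\cdot\}$ without subscript are taken over all randomness (predictors and responses). $\mathrm{tr}$ denotes the matrix trace. *)

theory Defs
  imports "HOL-Analysis.Analysis" "HOL-Probability.Probability"
begin

definition mat_trace :: "real^'p^'p \<Rightarrow> real" where
  "mat_trace A = (\<Sum>i\<in>UNIV. A $ i $ i)"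

definition design :: "('d \<Rightarrow> real^'p) \<Rightarrow> ('n \<Rightarrow> 'd) \<Rightarrow> real^'p^'n" where
  "design f z = (\<chi> i. f (z i))"

text \<open>Conditionally on X, Y is normal with mean (f X)' beta and standard deviation sigma:
  P(X in A, Y in B) = integral over A of N(f z' beta, sigma^2)(B) with respect to the law of X.\<close>
definition cond_normal :: "'w measure \<Rightarrow> ('w \<Rightarrow> real^'d) \<Rightarrow> ('w \<Rightarrow> real)
    \<Rightarrow> (real^'d \<Rightarrow> real^'p) \<Rightarrow> real^'p \<Rightarrow> real \<Rightarrow> bool" where
  "cond_normal M X Y f \<beta> \<sigma> \<longleftrightarrow>
     (\<forall>A\<in>sets (borel :: (real^'d) measure). \<forall>B\<in>sets (borel :: real measure).
        measure M {\<omega>\<in>space M. X \<omega> \<in> A \<and> Y \<omega> \<in> B} =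
        (\<integral>z. indicator A z * measure (density lborel (normal_density (f z \<bullet> \<beta>) \<sigma>)) B
           \<partial>(distr M borel X)))"

definition Expect :: "'w measure \<Rightarrow> ('w \<Rightarrow> real) \<Rightarrow> real" where
  "Expect M Z = (\<integral>\<omega>. Z \<omega> \<partial>M)"

definition Var :: "'w measure \<Rightarrow> ('w \<Rightarrow> real) \<Rightarrow> real" where
  "Var M Z = (\<integral>\<omega>. (Z \<omega> - Expect M Z)\<^sup>2 \<partial>M)"

end

theory Submission
  imports Defs
begin



abbreviation stdN :: "real measure" where "stdN \<equiv> density lborel std_normal_density"

lemma prob_space_stdN: "prob_space stdN"
  by (rule prob_space_normal_density) simp

lemma sets_stdN[simp, measurable_cong]: "sets stdN = sets borel" by simp
lemma space_stdN[simp]: "space stdN = UNIV" by simp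

lemma integrable_stdN_pow: "integrable stdN (\<lambda>t. t ^ k)"
  by (subst integrable_density) (auto simp: integrable_std_normal_moment)

lemma integral_stdN_pow: "(\<integral>t. t ^ k \<partial>stdN) = (\<integral>t. std_normal_density t * t ^ k \<partial>lborel)"
  by (subst integral_density) auto

definition mom :: "nat \<Rightarrow> real" where "mom k = (\<integral>t. t ^ k \<partial>stdN)"

lemma mom_0: "mom 0 = 1"
  unfolding mom_def using prob_space.prob_space[OF prob_space_stdN]
  by (simp add: measure_def prob_space_stdN prob_space.emeasure_space_1)

lemma mom_odd: "mom (2*k+1) = 0"
  unfolding mom_def integral_stdN_pow by (rule integral_std_normal_moment_odd)

lemma mom_1: "mom 1 = 0" using mom_odd[of 0] by simp
lemma mom_3: "mom 3 = 0" using mom_odd[of 1] by simp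
lemma mom_2: "mom 2 = 1"
  unfolding mom_def integral_stdN_pow using integral_std_normal_moment_even[of 1] by simp
lemma mom_4: "mom 4 = 3"
  unfolding mom_def integral_stdN_pow using integral_std_normal_moment_even[of 2]
  by (simp add: fact_numeral)

lemma mom_Suc_simps: "mom (Suc 0) = 0" "mom (Suc (Suc 0)) = 1" "mom (Suc (Suc (Suc 0))) = 0"
   "mom (Suc (Suc (Suc (Suc 0)))) = 3"
  using mom_1 mom_2 mom_3 mom_4 by (simp_all add: numeral_eq_Suc)


interpretation stdN: prob_space stdN by (rule prob_space_stdN)

locale gauss =
  fixes Q :: "('k::finite \<Rightarrow> real) measure"
  assumes Q_def: "Q = PiM UNIV (\<lambda>_. stdN)"
begin

sublocale P: product_prob_space "\<lambda>_::'k. stdN" UNIV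
  by (simp add: product_prob_space_def product_prob_space_axioms_def product_sigma_finite_def
        prob_space_imp_sigma_finite prob_space_stdN)

sublocale prob_space Q
  unfolding Q_def by (rule prob_space_PiM) (simp add: prob_space_stdN)

lemma space_Q[simp]: "space Q = UNIV"
  by (simp add: Q_def space_PiM)

lemma sets_Q: "sets Q = sets (PiM UNIV (\<lambda>_::'k. borel :: real measure))"
  unfolding Q_def by (rule sets_PiM_cong) auto

lemma Q_meas_cong[measurable_cong]: "sets Q = sets (PiM UNIV (\<lambda>_::'k. borel :: real measure))"
  by (rule sets_Q)

lemma integrable_mono: "integrable Q (\<lambda>es. \<Prod>i\<in>UNIV. es i ^ c i)"
  unfolding Q_def by (rule P.product_integrable_prod) (auto intro: integrable_stdN_pow)

lemma integral_mono: "(\<integral>es. (\<Prod>i\<in>UNIV. es i ^ c i) \<partial>Q) = (\<Prod>i\<in>UNIV. mom (c i))"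
  unfolding Q_def mom_def by (rule P.product_integral_prod) (auto intro: integrable_stdN_pow)


definition cnt4 :: "'k \<Rightarrow> 'k \<Rightarrow> 'k \<Rightarrow> 'k \<Rightarrow> 'k \<Rightarrow> nat" where
  "cnt4 a b c d i = (if a = i then 1 else 0) + (if b = i then 1 else 0) + (if c = i then 1 else 0) + (if d = i then 1 else 0)"

lemma prod_ind: "(\<Prod>i\<in>(UNIV::'k set). (x i::real) ^ (if a = i then 1 else 0)) = x a"
proof -
  have "(\<Prod>i\<in>UNIV. (x i::real) ^ (if a = i then 1 else 0)) = (\<Prod>i\<in>UNIV. if a = i then x i else 1)"
    by (rule prod.cong) auto
  also have "\<dots> = x a" by (simp add: prod.delta prod.delta')
  finally show ?thesis .
qed

lemma monom4: "(es::'k\<Rightarrow>real) a * es b * es c * es d = (\<Prod>i\<in>UNIV. es i ^ cnt4 a b c d i)"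
  unfolding cnt4_def power_add prod.distrib prod_ind by simp

lemma mom_prod4: "(\<Prod>i\<in>(UNIV::'k set). mom (cnt4 a b c d i)) =
   (if a = b \<and> c = d then 1 else 0) + (if a = c \<and> b = d then 1 else 0) + (if a = d \<and> b = c then 1 else 0)"
proof -
  have "(\<Prod>i\<in>UNIV. mom (cnt4 a b c d i)) = (\<Prod>i\<in>{a,b,c,d}. mom (cnt4 a b c d i))"
    by (rule prod.mono_neutral_right) (auto simp: cnt4_def mom_0)
  also have "\<dots> = (if a = b \<and> c = d then 1 else 0) + (if a = c \<and> b = d then 1 else 0) + (if a = d \<and> b = c then 1 else 0)"
    by (cases "a = b"; cases "a = c"; cases "a = d"; cases "b = c"; cases "b = d"; cases "c = d")
       (simp_all add: cnt4_def mom_0 mom_Suc_simps insert_commute)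
  finally show ?thesis .
qed

lemma integrable4: "integrable Q (\<lambda>es. es a * es b * es c * es d)"
  unfolding monom4 by (rule integrable_mono)

lemma integral4: "(\<integral>es. es a * es b * es c * es d \<partial>Q) =
   (if a = b \<and> c = d then 1 else 0) + (if a = c \<and> b = d then 1 else 0) + (if a = d \<and> b = c then 1 else 0)"
  unfolding monom4 integral_mono mom_prod4 ..

definition cnt2 :: "'k \<Rightarrow> 'k \<Rightarrow> 'k \<Rightarrow> nat" where
  "cnt2 a b i = (if a = i then 1 else 0) + (if b = i then 1 else 0)"

lemma monom2: "(es::'k\<Rightarrow>real) a * es b = (\<Prod>i\<in>UNIV. es i ^ cnt2 a b i)"
  unfolding cnt2_def power_add prod.distrib prod_ind by simp

lemma integrable2: "integrable Q (\<lambda>es. es a * es b)"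
  unfolding monom2 by (rule integrable_mono)

lemma integral2: "(\<integral>es. es a * es b \<partial>Q) = (if a = b then 1 else 0)"
proof -
  have "(\<Prod>i\<in>UNIV. mom (cnt2 a b i)) = (\<Prod>i\<in>{a,b}. mom (cnt2 a b i))"
    by (rule prod.mono_neutral_right) (auto simp: cnt2_def mom_0)
  also have "\<dots> = (if a = b then 1 else 0)"
    by (cases "a = b") (simp_all add: cnt2_def mom_0 mom_Suc_simps)
  finally show ?thesis unfolding monom2 integral_mono .
qed

end




lemma sum_if_const: "(\<Sum>x\<in>S. if P then f x else 0) = (if P then (\<Sum>x\<in>S. f x) else (0::'a::comm_monoid_add))"
  by auto

lemma isserlis_sum:
  fixes A B :: "'k::finite \<Rightarrow> 'k \<Rightarrow> real"
  shows "(\<Sum>k1\<in>UNIV. \<Sum>k2\<in>UNIV. \<Sum>k3\<in>UNIV. \<Sum>k4\<in>UNIV. A k1 k2 * B k3 k4 *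
      ((if k1 = k2 \<and> k3 = k4 then 1 else 0) + (if k1 = k3 \<and> k2 = k4 then 1 else 0) + (if k1 = k4 \<and> k2 = k3 then 1 else 0)))
   = (\<Sum>k\<in>UNIV. A k k) * (\<Sum>k\<in>UNIV. B k k) + (\<Sum>k1\<in>UNIV. \<Sum>k2\<in>UNIV. A k1 k2 * B k1 k2)
     + (\<Sum>k1\<in>UNIV. \<Sum>k2\<in>UNIV. A k1 k2 * B k2 k1)"
proof -
  have e: "\<And>k1 k2 k3 k4. A k1 k2 * B k3 k4 *
      ((if k1 = k2 \<and> k3 = k4 then 1 else 0) + (if k1 = k3 \<and> k2 = k4 then 1 else 0) + (if k1 = k4 \<and> k2 = k3 then 1 else 0))
     = (if k2 = k1 then (if k4 = k3 then A k1 k2 * B k3 k4 else 0) else 0)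
       + (if k3 = k1 then (if k4 = k2 then A k1 k2 * B k3 k4 else 0) else 0)
       + (if k4 = k1 then (if k3 = k2 then A k1 k2 * B k3 k4 else 0) else 0)"
    by auto
  show ?thesis
    unfolding e sum.distrib
    apply (simp add: sum.delta sum.delta' sum_if_const sum_distrib_left sum_distrib_right)
    apply (rule sum.swap)
    done
qed

lemma sq_expand: "(\<Sum>k\<in>UNIV. a k * (es k::real))\<^sup>2 =
   (\<Sum>k1\<in>UNIV. \<Sum>k2\<in>UNIV. (a k1 * a k2) * (es k1 * es k2))"
  by (simp add: power2_eq_square sum_product mult_ac)

lemma quad_expand: "(\<Sum>j\<in>UNIV. (\<Sum>k\<in>UNIV. a j k * (es k::real))\<^sup>2)\<^sup>2 =
   (\<Sum>j\<in>UNIV. \<Sum>l\<in>UNIV. \<Sum>k1\<in>UNIV. \<Sum>k2\<in>UNIV. \<Sum>k3\<in>UNIV. \<Sum>k4\<in>UNIV.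
       (a j k1 * a j k2 * a l k3 * a l k4) * (es k1 * es k2 * es k3 * es k4))"
proof -
  have "(\<Sum>j\<in>UNIV. (\<Sum>k\<in>UNIV. a j k * (es k::real))\<^sup>2)\<^sup>2 =
    (\<Sum>j\<in>UNIV. \<Sum>l\<in>UNIV. (\<Sum>k\<in>UNIV. a j k * (es k::real))\<^sup>2 * (\<Sum>k\<in>UNIV. a l k * (es k::real))\<^sup>2)"
    by (subst power2_eq_square) (rule sum_product)
  also have "\<dots> = (\<Sum>j\<in>UNIV. \<Sum>l\<in>UNIV. \<Sum>k1\<in>UNIV. \<Sum>k2\<in>UNIV. \<Sum>k3\<in>UNIV. \<Sum>k4\<in>UNIV.
       (a j k1 * a j k2 * a l k3 * a l k4) * (es k1 * es k2 * es k3 * es k4))"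
    unfolding sq_expand sum_distrib_right
    unfolding sum_distrib_left
    by (intro sum.cong refl) (simp add: mult_ac)
  finally show ?thesis .
qed

context gauss begin

lemma quad_int:
  fixes a :: "'j::finite \<Rightarrow> 'k \<Rightarrow> real"
  shows "integrable Q (\<lambda>es. \<Sum>j\<in>UNIV. (\<Sum>k\<in>UNIV. a j k * es k)\<^sup>2)"
    and "(\<integral>es. (\<Sum>j\<in>UNIV. (\<Sum>k\<in>UNIV. a j k * es k)\<^sup>2) \<partial>Q) = (\<Sum>j\<in>UNIV. \<Sum>k\<in>UNIV. (a j k)\<^sup>2)"
proof -
  show "integrable Q (\<lambda>es. \<Sum>j\<in>UNIV. (\<Sum>k\<in>UNIV. a j k * es k)\<^sup>2)"
    unfolding sq_expand by (intro Bochner_Integration.integrable_sum integrable_mult_right integrable2)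
  have "(\<integral>es. (\<Sum>j\<in>UNIV. (\<Sum>k\<in>UNIV. a j k * es k)\<^sup>2) \<partial>Q)
     = (\<Sum>j\<in>UNIV. \<Sum>k1\<in>UNIV. \<Sum>k2\<in>UNIV. (a j k1 * a j k2) * (if k1 = k2 then 1 else 0))"
    unfolding sq_expand
    by (simp add: Bochner_Integration.integrable_sum Bochner_Integration.integral_sum integrable2 integral2)
  also have "\<dots> = (\<Sum>j\<in>UNIV. \<Sum>k\<in>UNIV. (a j k)\<^sup>2)"
    by (simp add: power2_eq_square if_distrib[of "\<lambda>x. _ * x"] sum.delta cong: if_cong)
  finally show "(\<integral>es. (\<Sum>j\<in>UNIV. (\<Sum>k\<in>UNIV. a j k * es k)\<^sup>2) \<partial>Q) = (\<Sum>j\<in>UNIV. \<Sum>k\<in>UNIV. (a j k)\<^sup>2)" .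
qed

lemma quart_int:
  fixes a :: "'j::finite \<Rightarrow> 'k \<Rightarrow> real"
  shows "integrable Q (\<lambda>es. (\<Sum>j\<in>UNIV. (\<Sum>k\<in>UNIV. a j k * es k)\<^sup>2)\<^sup>2)"
    and "(\<integral>es. (\<Sum>j\<in>UNIV. (\<Sum>k\<in>UNIV. a j k * es k)\<^sup>2)\<^sup>2 \<partial>Q) =
      (\<Sum>j\<in>UNIV. \<Sum>l\<in>UNIV. (\<Sum>k\<in>UNIV. (a j k)\<^sup>2) * (\<Sum>k\<in>UNIV. (a l k)\<^sup>2)
          + 2 * (\<Sum>k\<in>UNIV. a j k * a l k)\<^sup>2)"
proof -
  show "integrable Q (\<lambda>es. (\<Sum>j\<in>UNIV. (\<Sum>k\<in>UNIV. a j k * es k)\<^sup>2)\<^sup>2)"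
    unfolding quad_expand by (intro Bochner_Integration.integrable_sum integrable_mult_right integrable4)
  have "(\<integral>es. (\<Sum>j\<in>UNIV. (\<Sum>k\<in>UNIV. a j k * es k)\<^sup>2)\<^sup>2 \<partial>Q) =
     (\<Sum>j\<in>UNIV. \<Sum>l\<in>UNIV. \<Sum>k1\<in>UNIV. \<Sum>k2\<in>UNIV. \<Sum>k3\<in>UNIV. \<Sum>k4\<in>UNIV.
       (a j k1 * a j k2 * a l k3 * a l k4) *
      ((if k1 = k2 \<and> k3 = k4 then 1 else 0) + (if k1 = k3 \<and> k2 = k4 then 1 else 0) + (if k1 = k4 \<and> k2 = k3 then 1 else 0)))"
    unfolding quad_expand
    by (simp add: Bochner_Integration.integrable_sum Bochner_Integration.integral_sum integrable4 integral4 integral_mult_right_zero)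
  also have "\<dots> = (\<Sum>j\<in>UNIV. \<Sum>l\<in>UNIV. (\<Sum>k\<in>UNIV. (a j k)\<^sup>2) * (\<Sum>k\<in>UNIV. (a l k)\<^sup>2)
          + 2 * (\<Sum>k\<in>UNIV. a j k * a l k)\<^sup>2)"
  proof (intro sum.cong refl)
    fix j l
    have "(\<Sum>k1\<in>UNIV. \<Sum>k2\<in>UNIV. \<Sum>k3\<in>UNIV. \<Sum>k4\<in>UNIV.
       (a j k1 * a j k2 * a l k3 * a l k4) *
      ((if k1 = k2 \<and> k3 = k4 then 1 else 0) + (if k1 = k3 \<and> k2 = k4 then 1 else 0) + (if k1 = k4 \<and> k2 = k3 then 1 else 0)))
     = (\<Sum>k1\<in>UNIV. \<Sum>k2\<in>UNIV. \<Sum>k3\<in>UNIV. \<Sum>k4\<in>UNIV.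
       (a j k1 * a j k2) * (a l k3 * a l k4) *
      ((if k1 = k2 \<and> k3 = k4 then 1 else 0) + (if k1 = k3 \<and> k2 = k4 then 1 else 0) + (if k1 = k4 \<and> k2 = k3 then 1 else 0)))"
      by (simp only: mult.assoc)
    also have "(\<Sum>k1\<in>UNIV. \<Sum>k2\<in>UNIV. \<Sum>k3\<in>UNIV. \<Sum>k4\<in>UNIV.
       (a j k1 * a j k2) * (a l k3 * a l k4) *
      ((if k1 = k2 \<and> k3 = k4 then 1 else 0) + (if k1 = k3 \<and> k2 = k4 then 1 else 0) + (if k1 = k4 \<and> k2 = k3 then 1 else 0)))
      = (\<Sum>k\<in>UNIV. (a j k)\<^sup>2) * (\<Sum>k\<in>UNIV. (a l k)\<^sup>2) + 2 * (\<Sum>k\<in>UNIV. a j k * a l k)\<^sup>2"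
      unfolding isserlis_sum[of "\<lambda>k1 k2. a j k1 * a j k2" "\<lambda>k3 k4. a l k3 * a l k4"]
      by (simp add: power2_eq_square sum_product mult_ac)
    finally show "(\<Sum>k1\<in>UNIV. \<Sum>k2\<in>UNIV. \<Sum>k3\<in>UNIV. \<Sum>k4\<in>UNIV.
       (a j k1 * a j k2 * a l k3 * a l k4) *
      ((if k1 = k2 \<and> k3 = k4 then 1 else 0) + (if k1 = k3 \<and> k2 = k4 then 1 else 0) + (if k1 = k4 \<and> k2 = k3 then 1 else 0)))
      = (\<Sum>k\<in>UNIV. (a j k)\<^sup>2) * (\<Sum>k\<in>UNIV. (a l k)\<^sup>2) + 2 * (\<Sum>k\<in>UNIV. a j k * a l k)\<^sup>2" .
  qed
  finally show "(\<integral>es. (\<Sum>j\<in>UNIV. (\<Sum>k\<in>UNIV. a j k * es k)\<^sup>2)\<^sup>2 \<partial>Q) =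
      (\<Sum>j\<in>UNIV. \<Sum>l\<in>UNIV. (\<Sum>k\<in>UNIV. (a j k)\<^sup>2) * (\<Sum>k\<in>UNIV. (a l k)\<^sup>2)
          + 2 * (\<Sum>k\<in>UNIV. a j k * a l k)\<^sup>2)" .
qed

end




lemma borel_pair_cong[measurable_cong]:
  "sets (borel :: ('a::second_countable_topology \<times> 'b::second_countable_topology) measure) = sets (borel \<Otimes>\<^sub>M borel)"
  by (metis borel_prod)

locale model = prob_space M for M :: "'w measure" +
  fixes f :: "real^'d \<Rightarrow> real^'p"
    and x :: "'n::finite \<Rightarrow> 'w \<Rightarrow> real^'d" and y :: "'n \<Rightarrow> 'w \<Rightarrow> real"
    and u :: "'m::finite \<Rightarrow> 'w \<Rightarrow> real^'d" and v :: "'m \<Rightarrow> 'w \<Rightarrow> real"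
    and \<beta> :: "real^'p" and \<sigma> :: real
  assumes f_meas[measurable]: "f \<in> borel_measurable borel"
    and indep: "indep_vars (\<lambda>_. borel)
        (\<lambda>k \<omega>. case k of Inl i \<Rightarrow> (x i \<omega>, y i \<omega>) | Inr j \<Rightarrow> (u j \<omega>, v j \<omega>)) UNIV"
    and ident: "\<exists>D. (\<forall>i. distr M borel (\<lambda>\<omega>. (x i \<omega>, y i \<omega>)) = D)
                   \<and> (\<forall>j. distr M borel (\<lambda>\<omega>. (u j \<omega>, v j \<omega>)) = D)"
    and cond_x: "\<And>i. cond_normal M (x i) (y i) f \<beta> \<sigma>"
    and sigma_pos: "\<sigma> > 0"
begin

definition Z :: "'n + 'm \<Rightarrow> 'w \<Rightarrow> (real^'d) \<times> real" where
  "Z k \<omega> = (case k of Inl i \<Rightarrow> (x i \<omega>, y i \<omega>) | Inr j \<Rightarrow> (u j \<omega>, v j \<omega>))"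

lemma Z_meas[measurable]: "Z k \<in> borel_measurable M"
  using indep unfolding indep_vars_def Z_def[abs_def] by auto

definition Zv :: "'w \<Rightarrow> 'n + 'm \<Rightarrow> (real^'d) \<times> real" where
  "Zv \<omega> = (\<lambda>k. Z k \<omega>)"

lemma Zv_meas[measurable]: "Zv \<in> M \<rightarrow>\<^sub>M PiM UNIV (\<lambda>_. borel)"
  unfolding Zv_def by (rule measurable_PiM_single') auto

definition D :: "((real^'d) \<times> real) measure" where
  "D = distr M borel (Z (Inl (SOME i. True)))"

lemma distr_Z: "distr M borel (Z k) = D"
proof -
  obtain D' where D': "\<And>i. distr M borel (\<lambda>\<omega>. (x i \<omega>, y i \<omega>)) = D'"
     "\<And>j. distr M borel (\<lambda>\<omega>. (u j \<omega>, v j \<omega>)) = D'"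
    using ident by auto
  have "\<And>k. distr M borel (Z k) = D'"
    by (case_tac k) (simp_all add: Z_def[abs_def] D')
  then show ?thesis unfolding D_def by simp
qed

lemma law: "distr M (PiM UNIV (\<lambda>_. borel)) Zv = PiM UNIV (\<lambda>_. D)"
proof -
  have "indep_vars (\<lambda>_. borel) Z UNIV" using indep unfolding Z_def[abs_def] .
  then have "distr M (\<Pi>\<^sub>M i\<in>UNIV. borel) (\<lambda>x. \<lambda>i\<in>UNIV. Z i x) = (\<Pi>\<^sub>M i\<in>UNIV. distr M borel (Z i))"
    by (subst (asm) indep_vars_iff_distr_eq_PiM) auto
  then show ?thesis by (simp add: Zv_def[abs_def] restrict_UNIV distr_Z)
qed

lemma sets_D[simp, measurable_cong]: "sets D = sets borel"
  unfolding D_def by simp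

lemma space_D[simp]: "space D = UNIV"
  unfolding D_def by simp

lemma prob_D: "prob_space D"
  unfolding D_def by (rule prob_space_distr) simp

definition \<mu> :: "(real^'d) measure" where "\<mu> = distr D borel fst"

lemma sets_mu[simp, measurable_cong]: "sets \<mu> = sets borel"
  unfolding \<mu>_def by simp

lemma space_mu[simp]: "space \<mu> = UNIV"
  unfolding \<mu>_def by simp

lemma prob_mu: "prob_space \<mu>"
  unfolding \<mu>_def by (rule prob_space.prob_space_distr[OF prob_D]) simp

lemma distr_x: "distr M borel (x i) = \<mu>"
proof -
  have "\<mu> = distr (distr M borel (Z (Inl i))) borel fst" unfolding \<mu>_def distr_Z ..
  also have "\<dots> = distr M borel (fst \<circ> Z (Inl i))"
    by (rule distr_distr) auto
  also have "fst \<circ> Z (Inl i) = x i" by (auto simp: Z_def)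
  finally show ?thesis ..
qed

definition T :: "(real^'d) \<times> real \<Rightarrow> (real^'d) \<times> real" where
  "T p = (fst p, f (fst p) \<bullet> \<beta> + \<sigma> * snd p)"

lemma T_meas[measurable]: "T \<in> borel_measurable borel"
  unfolding T_def by measurable

lemma normal_affine:
  assumes B: "B \<in> sets borel"
  shows "emeasure stdN {e. c + \<sigma> * e \<in> B} = emeasure (density lborel (normal_density c \<sigma>)) B"
proof -
  have d0: "distributed stdN lborel (\<lambda>x. x) std_normal_density"
    unfolding distributed_def by (auto simp: distr_id2)
  have "distributed stdN lborel (\<lambda>x. c + \<sigma> * x) (normal_density (c + \<sigma> * 0) (\<bar>\<sigma>\<bar> * 1))"
    by (rule stdN.normal_density_affine[OF d0]) (use sigma_pos in auto)
  then have "distr stdN lborel (\<lambda>x. c + \<sigma> * x) = density lborel (normal_density c \<sigma>)"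
    using sigma_pos unfolding distributed_def by simp
  then have "emeasure (distr stdN lborel (\<lambda>x. c + \<sigma> * x)) B = emeasure (density lborel (normal_density c \<sigma>)) B"
    by simp
  moreover have "emeasure (distr stdN lborel (\<lambda>x. c + \<sigma> * x)) B = emeasure stdN {e. c + \<sigma> * e \<in> B}"
    using B by (subst emeasure_distr) (auto intro!: arg_cong[where f="emeasure stdN"])
  ultimately show ?thesis by simp
qed

lemma section_meas: "(\<lambda>z. emeasure stdN (Pair z -` X)) \<in> borel_measurable \<mu>"
  if "X \<in> sets (\<mu> \<Otimes>\<^sub>M stdN)" for X
  by (rule sigma_finite_measure.measurable_emeasure_Pair[OF _ that])
     (simp add: prob_space_imp_sigma_finite prob_space_stdN)

lemma T_sect: "Pair z -` (T -` (a \<times> b) \<inter> space (\<mu> \<Otimes>\<^sub>M stdN)) =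
   (if z \<in> a then {e. f z \<bullet> \<beta> + \<sigma> * e \<in> b} else {})"
  by (auto simp: T_def space_pair_measure)

lemma D_eq: "D = distr (\<mu> \<Otimes>\<^sub>M stdN) borel T"
proof -
  let ?E = "{a \<times> b |a b. a \<in> sets (borel :: (real^'d) measure) \<and> b \<in> sets (borel :: real measure)}"
  let ?N = "\<lambda>z. density lborel (normal_density (f z \<bullet> \<beta>) \<sigma>)"
  define i0 :: 'n where "i0 = (SOME i. True)"
  interpret D: prob_space D by (rule prob_D)
  interpret mu: prob_space \<mu> by (rule prob_mu)
  interpret pmN: pair_prob_space \<mu> stdN
    by (simp add: pair_prob_space_def pair_sigma_finite_def prob_space_imp_sigma_finite prob_space_stdN prob_mu
       prob_space_stdN)
  have sD: "sets D = sigma_sets (UNIV \<times> UNIV) ?E"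
    by (simp add: borel_prod[symmetric] sets_pair_measure del: borel_prod)
  have rect: "a \<times> b \<in> sets (borel :: ((real^'d) \<times> real) measure)"
    if "a \<in> sets borel" "b \<in> sets borel" for a :: "(real^'d) set" and b :: "real set"
    using that by (simp add: borel_prod[symmetric] del: borel_prod)
  have eq: "emeasure D X = emeasure (distr (\<mu> \<Otimes>\<^sub>M stdN) borel T) X" if X: "X \<in> ?E" for X
  proof -
    obtain a b where ab: "X = a \<times> b" "a \<in> sets borel" "b \<in> sets borel" using X by auto
    have Nz: "measure (?N z) b = enn2real (emeasure stdN {e. f z \<bullet> \<beta> + \<sigma> * e \<in> b})" for z
      using normal_affine[OF ab(3), of "f z \<bullet> \<beta>"] by (simp add: measure_def)
    have Nz': "emeasure stdN {e. f z \<bullet> \<beta> + \<sigma> * e \<in> b} = ennreal (measure (?N z) b)" for z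
      unfolding Nz by (simp add: stdN.emeasure_eq_measure)
    have sect_meas: "(\<lambda>z. emeasure stdN {e. f z \<bullet> \<beta> + \<sigma> * e \<in> b}) \<in> borel_measurable \<mu>"
    proof -
      have "(\<lambda>z. emeasure stdN (Pair z -` (T -` (UNIV \<times> b) \<inter> space (\<mu> \<Otimes>\<^sub>M stdN)))) \<in> borel_measurable \<mu>"
        by (rule section_meas) (use ab rect[of UNIV b] in measurable)
      then show ?thesis unfolding T_sect by simp
    qed
    have meas: "(\<lambda>z. indicator a z * measure (?N z) b) \<in> borel_measurable \<mu>"
      unfolding Nz using sect_meas ab by measurable
    have int: "integrable \<mu> (\<lambda>z. indicator a z * measure (?N z) b)"
    proof (rule mu.integrable_const_bound[where B=1])
      show "AE z in \<mu>. norm (indicator a z * measure (?N z) b) \<le> 1"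
        by (auto simp: indicator_def measure_le_1 prob_space_normal_density sigma_pos
                 intro!: prob_space.prob_le_1)
    qed (rule meas)
    have "emeasure D X = emeasure M {\<omega>\<in>space M. x i0 \<omega> \<in> a \<and> y i0 \<omega> \<in> b}"
      unfolding distr_Z[of "Inl i0", symmetric] ab(1) using ab rect[OF ab(2,3)]
      by (subst emeasure_distr) (auto intro!: arg_cong[where f="emeasure M"] simp: Z_def)
    also have "\<dots> = ennreal (measure M {\<omega>\<in>space M. x i0 \<omega> \<in> a \<and> y i0 \<omega> \<in> b})"
      by (simp add: emeasure_eq_measure)
    also have "\<dots> = ennreal (\<integral>z. indicator a z * measure (?N z) b \<partial>\<mu>)"
      using cond_x[of i0] ab unfolding cond_normal_def distr_x by simp
    also have "\<dots> = (\<integral>\<^sup>+z. ennreal (indicator a z * measure (?N z) b) \<partial>\<mu>)"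
      by (rule nn_integral_eq_integral[symmetric]) (use int in auto)
    also have "\<dots> = (\<integral>\<^sup>+z. emeasure stdN (Pair z -` (T -` (a \<times> b) \<inter> space (\<mu> \<Otimes>\<^sub>M stdN))) \<partial>\<mu>)"
      unfolding T_sect by (intro nn_integral_cong) (simp add: Nz' indicator_def)
    also have "\<dots> = emeasure (\<mu> \<Otimes>\<^sub>M stdN) (T -` (a \<times> b) \<inter> space (\<mu> \<Otimes>\<^sub>M stdN))"
      by (rule sigma_finite_measure.emeasure_pair_measure_alt[OF prob_space_imp_sigma_finite[OF prob_space_stdN], symmetric]) (use ab rect[OF ab(2,3)] in measurable)
    also have "\<dots> = emeasure (distr (\<mu> \<Otimes>\<^sub>M stdN) borel T) X"
      unfolding ab(1) by (rule emeasure_distr[symmetric]) (use ab rect[OF ab(2,3)] in measurable)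
    finally show ?thesis .
  qed
  show ?thesis
  proof (rule measure_eqI_generator_eq[OF Int_stable_pair_measure_generator, where A="\<lambda>_. UNIV \<times> UNIV"])
    show "?E \<subseteq> Pow (UNIV \<times> UNIV)" by auto
    show "sets D = sigma_sets (UNIV \<times> UNIV) ?E" by (rule sD)
    show "sets (distr (\<mu> \<Otimes>\<^sub>M stdN) borel T) = sigma_sets (UNIV \<times> UNIV) ?E"
      using sD by simp
    show "range (\<lambda>_. UNIV \<times> UNIV) \<subseteq> ?E"
      by (auto intro!: exI[of _ "UNIV :: (real^'d) set"] exI[of _ "UNIV :: real set"])
  qed (auto simp: eq D.emeasure_space_1[simplified])
qed

abbreviation Pmu :: "('n + 'm \<Rightarrow> real^'d) measure" where "Pmu \<equiv> PiM UNIV (\<lambda>_. \<mu>)"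
abbreviation QQ :: "('n + 'm \<Rightarrow> real) measure" where "QQ \<equiv> PiM UNIV (\<lambda>_. stdN)"

definition \<Phi> :: "('n + 'm \<Rightarrow> real^'d) \<times> ('n + 'm \<Rightarrow> real) \<Rightarrow> 'n + 'm \<Rightarrow> (real^'d) \<times> real" where
  "\<Phi> p = (\<lambda>k. T (fst p k, snd p k))"

lemma Phi_meas[measurable]: "\<Phi> \<in> Pmu \<Otimes>\<^sub>M QQ \<rightarrow>\<^sub>M PiM UNIV (\<lambda>_. borel)"
  unfolding \<Phi>_def by (rule measurable_PiM_single') auto

sublocale G: gauss QQ by unfold_locales simp

sublocale PM: product_prob_space "\<lambda>_::'n+'m. \<mu>" UNIV
  by (simp add: product_prob_space_def product_prob_space_axioms_def product_sigma_finite_def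
        prob_space_imp_sigma_finite prob_mu)

lemma prob_QQ: "prob_space QQ" by (rule prob_space_PiM) (simp add: prob_space_stdN)
lemma prob_Pmu: "prob_space Pmu" by (rule prob_space_PiM) (simp add: prob_mu)

sublocale PMQ: pair_prob_space Pmu QQ
  by (simp add: pair_prob_space_def pair_sigma_finite_def prob_space_imp_sigma_finite prob_QQ prob_Pmu)

lemma law2: "distr M (PiM UNIV (\<lambda>_. borel)) Zv = distr (Pmu \<Otimes>\<^sub>M QQ) (PiM UNIV (\<lambda>_. borel)) \<Phi>"
proof -
  interpret PD: product_prob_space "\<lambda>_::'n+'m. D" UNIV
    by (simp add: product_prob_space_def product_prob_space_axioms_def product_sigma_finite_def
        prob_space_imp_sigma_finite prob_D)
  interpret pmN: pair_prob_space \<mu> stdN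
    by (simp add: pair_prob_space_def pair_sigma_finite_def prob_space_imp_sigma_finite prob_space_stdN prob_mu)
  have sP: "sets (PiM UNIV (\<lambda>_::'n+'m. D)) = sets (PiM UNIV (\<lambda>_::'n+'m. borel :: ((real^'d) \<times> real) measure))"
    by (rule sets_PiM_cong) auto
  have "PiM UNIV (\<lambda>_. D) = distr (Pmu \<Otimes>\<^sub>M QQ) (PiM UNIV (\<lambda>_. D)) \<Phi>"
  proof (rule PD.PiM_eqI[symmetric])
    show "sets (distr (Pmu \<Otimes>\<^sub>M QQ) (PiM UNIV (\<lambda>_. D)) \<Phi>) = sets (PiM UNIV (\<lambda>_. D))" by simp
    fix A :: "'n + 'm \<Rightarrow> ((real^'d) \<times> real) set"
    assume A: "\<And>i. i \<in> UNIV \<Longrightarrow> A i \<in> sets D"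
    then have A': "A i \<in> sets borel" for i by auto
    have TA: "T -` A k \<inter> space (\<mu> \<Otimes>\<^sub>M stdN) \<in> sets (\<mu> \<Otimes>\<^sub>M stdN)" for k
      using A' by measurable
    have secm: "Pair z -` (T -` A k \<inter> space (\<mu> \<Otimes>\<^sub>M stdN)) \<in> sets stdN" for z k
      by (rule sets_Pair1[OF TA])
    have PhiA: "\<Phi> -` Pi\<^sub>E UNIV A \<inter> space (Pmu \<Otimes>\<^sub>M QQ) \<in> sets (Pmu \<Otimes>\<^sub>M QQ)"
    proof -
      have "Pi\<^sub>E UNIV A \<in> sets (PiM UNIV (\<lambda>_::'n+'m. borel :: ((real^'d) \<times> real) measure))"
        using A' by (intro sets_PiM_I_finite) auto
      then show ?thesis by (rule measurable_sets[OF Phi_meas])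
    qed
    have sect: "Pair xs -` (\<Phi> -` Pi\<^sub>E UNIV A \<inter> space (Pmu \<Otimes>\<^sub>M QQ))
         = Pi\<^sub>E UNIV (\<lambda>k. Pair (xs k) -` (T -` A k \<inter> space (\<mu> \<Otimes>\<^sub>M stdN)))" for xs
      by (auto simp: \<Phi>_def space_pair_measure space_PiM PiE_def extensional_def Pi_def)
    have "emeasure (distr (Pmu \<Otimes>\<^sub>M QQ) (PiM UNIV (\<lambda>_. D)) \<Phi>) (Pi\<^sub>E UNIV A)
        = emeasure (Pmu \<Otimes>\<^sub>M QQ) (\<Phi> -` Pi\<^sub>E UNIV A \<inter> space (Pmu \<Otimes>\<^sub>M QQ))"
      by (rule emeasure_distr) (use A in \<open>auto intro!: sets_PiM_I_finite\<close>)
    also have "\<dots> = (\<integral>\<^sup>+xs. emeasure QQ (Pair xs -` (\<Phi> -` Pi\<^sub>E UNIV A \<inter> space (Pmu \<Otimes>\<^sub>M QQ))) \<partial>Pmu)"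
      by (rule sigma_finite_measure.emeasure_pair_measure_alt[OF prob_space_imp_sigma_finite[OF prob_QQ] PhiA])
    also have "\<dots> = (\<integral>\<^sup>+xs. (\<Prod>k\<in>UNIV. emeasure stdN (Pair (xs k) -` (T -` A k \<inter> space (\<mu> \<Otimes>\<^sub>M stdN)))) \<partial>Pmu)"
      unfolding sect
      by (intro nn_integral_cong G.P.emeasure_PiM secm) simp
    also have "\<dots> = (\<Prod>k\<in>UNIV. \<integral>\<^sup>+z. emeasure stdN (Pair z -` (T -` A k \<inter> space (\<mu> \<Otimes>\<^sub>M stdN))) \<partial>\<mu>)"
      by (rule PM.product_nn_integral_prod) (simp, simp only: section_meas TA)
    also have "\<dots> = (\<Prod>k\<in>UNIV. emeasure D (A k))"
    proof (intro prod.cong refl)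
      fix k
      have "(\<integral>\<^sup>+z. emeasure stdN (Pair z -` (T -` A k \<inter> space (\<mu> \<Otimes>\<^sub>M stdN))) \<partial>\<mu>)
          = emeasure (\<mu> \<Otimes>\<^sub>M stdN) (T -` A k \<inter> space (\<mu> \<Otimes>\<^sub>M stdN))"
        by (rule sigma_finite_measure.emeasure_pair_measure_alt[OF prob_space_imp_sigma_finite[OF prob_space_stdN] TA, symmetric])
      also have "\<dots> = emeasure D (A k)"
        unfolding D_eq by (rule emeasure_distr[symmetric]) (use A' in auto)
      finally show "(\<integral>\<^sup>+z. emeasure stdN (Pair z -` (T -` A k \<inter> space (\<mu> \<Otimes>\<^sub>M stdN))) \<partial>\<mu>) = emeasure D (A k)" .
    qed
    finally show "emeasure (distr (Pmu \<Otimes>\<^sub>M QQ) (PiM UNIV (\<lambda>_. D)) \<Phi>) (Pi\<^sub>E UNIV A) = (\<Prod>k\<in>UNIV. emeasure D (A k))" .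
  qed simp
  also have "\<dots> = distr (Pmu \<Otimes>\<^sub>M QQ) (PiM UNIV (\<lambda>_. borel)) \<Phi>"
    by (rule distr_cong[OF refl sP]) simp
  finally show ?thesis unfolding law .
qed

lemma transfer:
  fixes F :: "('n + 'm \<Rightarrow> (real^'d) \<times> real) \<Rightarrow> real"
  assumes F[measurable]: "F \<in> borel_measurable (PiM UNIV (\<lambda>_. borel))"
    and int: "integrable M (\<lambda>\<omega>. F (Zv \<omega>))"
  shows "(\<integral>\<omega>. F (Zv \<omega>) \<partial>M) = (\<integral>xs. (\<integral>es. F (\<Phi> (xs, es)) \<partial>QQ) \<partial>Pmu)"
    and "integrable Pmu (\<lambda>xs. \<integral>es. F (\<Phi> (xs, es)) \<partial>QQ)"
proof -
  have "integrable (distr M (PiM UNIV (\<lambda>_. borel)) Zv) F"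
    using int integrable_distr_eq[OF Zv_meas F] by simp
  then have "integrable (distr (Pmu \<Otimes>\<^sub>M QQ) (PiM UNIV (\<lambda>_. borel)) \<Phi>) F"
    unfolding law2 .
  then have i2: "integrable (Pmu \<Otimes>\<^sub>M QQ) (\<lambda>p. F (\<Phi> p))"
    using integrable_distr_eq[OF Phi_meas F] by simp
  have "(\<integral>\<omega>. F (Zv \<omega>) \<partial>M) = integral\<^sup>L (distr M (PiM UNIV (\<lambda>_. borel)) Zv) F"
    by (rule integral_distr[symmetric]) auto
  also have "\<dots> = integral\<^sup>L (distr (Pmu \<Otimes>\<^sub>M QQ) (PiM UNIV (\<lambda>_. borel)) \<Phi>) F"
    unfolding law2 ..
  also have "\<dots> = (\<integral>p. F (\<Phi> p) \<partial>(Pmu \<Otimes>\<^sub>M QQ))"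
    by (rule integral_distr) auto
  also have "\<dots> = (\<integral>xs. (\<integral>es. F (\<Phi> (xs, es)) \<partial>QQ) \<partial>Pmu)"
    by (rule PMQ.integral_fst'[OF i2, symmetric])
  finally show "(\<integral>\<omega>. F (Zv \<omega>) \<partial>M) = (\<integral>xs. (\<integral>es. F (\<Phi> (xs, es)) \<partial>QQ) \<partial>Pmu)" .
  show "integrable Pmu (\<lambda>xs. \<integral>es. F (\<Phi> (xs, es)) \<partial>QQ)"
    using PMQ.integrable_fst'[OF i2] by simp
qed

lemma AE_transfer:
  assumes P[measurable]: "{w \<in> space (PiM UNIV (\<lambda>_. borel)). P w} \<in> sets (PiM UNIV (\<lambda>_. borel))"
    and ae: "AE \<omega> in M. P (Zv \<omega>)"
    and R: "\<And>xs es. P (\<Phi> (xs, es)) \<longleftrightarrow> R xs"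
  shows "AE xs in Pmu. R xs"
proof -
  have "AE w in distr M (PiM UNIV (\<lambda>_. borel)) Zv. P w"
    using ae by (subst AE_distr_iff) auto
  then have "AE w in distr (Pmu \<Otimes>\<^sub>M QQ) (PiM UNIV (\<lambda>_. borel)) \<Phi>. P w"
    unfolding law2 .
  then have "AE p in Pmu \<Otimes>\<^sub>M QQ. P (\<Phi> p)"
    by (subst (asm) AE_distr_iff) auto
  then have "AE xs in Pmu. AE es in QQ. P (\<Phi> (xs, es))"
    by (rule PMQ.AE_pair)
  then show ?thesis
    unfolding R using prob_space.AE_const[OF prob_QQ] by simp
qed

end




lemma meas_vec_nth[measurable (raw)]:
  fixes g :: "'a \<Rightarrow> 'b::euclidean_space^'n"
  assumes [measurable]: "g \<in> borel_measurable M"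
  shows "(\<lambda>x. g x $ i) \<in> borel_measurable M"
proof -
  have "(\<lambda>v::'b^'n. v $ i) \<in> borel_measurable borel"
    by (intro borel_measurable_continuous_onI continuous_on_component continuous_on_id)
  then show ?thesis by measurable
qed

lemma meas_vec_lambda[measurable (raw)]:
  fixes h :: "'n::finite \<Rightarrow> 'a \<Rightarrow> 'b::euclidean_space"
  assumes [measurable]: "\<And>i. h i \<in> borel_measurable M"
  shows "(\<lambda>x. \<chi> i. h i x) \<in> borel_measurable M"
proof (subst borel_measurable_euclidean_space, intro ballI)
  fix b :: "'b^'n" assume "b \<in> Basis"
  then obtain i u where b: "b = axis i u" "u \<in> Basis" by (auto simp: Basis_vec_def)
  have "(\<lambda>x. (\<chi> i. h i x) \<bullet> axis i u) = (\<lambda>x. h i x \<bullet> u)"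
    by (simp add: inner_axis)
  then show "(\<lambda>x. (\<chi> i. h i x) \<bullet> b) \<in> borel_measurable M" unfolding b by simp
qed

lemma meas_det[measurable (raw)]:
  fixes g :: "'a \<Rightarrow> real^'n::finite^'n"
  assumes [measurable]: "g \<in> borel_measurable M"
  shows "(\<lambda>x. det (g x)) \<in> borel_measurable M"
  unfolding det_def by measurable

definition minv :: "real^'p^'p \<Rightarrow> real^'p^'p" where
  "minv G = (\<chi> r c. det (\<chi> i j. if j = r then (if i = c then 1 else 0) else G$i$j) / det G)"

lemma meas_minv[measurable (raw)]:
  fixes g :: "'a \<Rightarrow> real^'p::finite^'p"
  assumes [measurable]: "g \<in> borel_measurable M"
  shows "(\<lambda>x. minv (g x)) \<in> borel_measurable M"
  unfolding minv_def by measurable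

lemma matrix_inv_props:
  fixes G :: "real^'p::finite^'p"
  assumes "det G \<noteq> 0"
  shows "G ** matrix_inv G = mat 1" "matrix_inv G ** G = mat 1"
proof -
  have "invertible G" using assms by (simp add: invertible_det_nz)
  then have "\<exists>A'. G ** A' = mat 1 \<and> A' ** G = mat 1" unfolding invertible_def .
  then have "G ** matrix_inv G = mat 1 \<and> matrix_inv G ** G = mat 1"
    unfolding matrix_inv_def by (rule someI_ex)
  then show "G ** matrix_inv G = mat 1" "matrix_inv G ** G = mat 1" by auto
qed

lemma minv_eq:
  fixes G :: "real^'p::finite^'p"
  assumes d: "det G \<noteq> 0"
  shows "matrix_inv G = minv G"
proof -
  let ?K = "matrix_inv G"
  have col: "?K $ r $ c = det (\<chi> i j. if j = r then (if i = c then 1 else 0) else G$i$j) / det G" for r c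
  proof -
    have "G *v (?K *v axis c 1) = axis c 1"
      by (simp add: matrix_vector_mul_assoc matrix_inv_props(1)[OF d])
    then have "?K *v axis c 1 = (\<chi> k. det(\<chi> i j. if j=k then (axis c 1)$i else G$i$j) / det G)"
      using cramer[OF d] by blast
    then have "(?K *v axis c 1) $ r = det(\<chi> i j. if j=r then (axis c 1)$i else G$i$j) / det G"
      by simp
    moreover have "(?K *v axis c 1) $ r = ?K $ r $ c"
      by (simp add: matrix_vector_mult_def axis_def if_distrib[of "\<lambda>x. _ * x"] cong: if_cong)
    moreover have "(\<chi> i j. if j=r then (axis c 1)$i else G$i$j) = (\<chi> i j. if j = r then (if i = c then 1 else 0) else G$i$j)"
      by (rule arg_cong[where f=vec_lambda], rule ext) (simp add: axis_def vec_eq_iff)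
    ultimately show ?thesis by simp
  qed
  show ?thesis unfolding minv_def by (simp add: vec_eq_iff col)
qed




lemma inner_real_vec: "(v::real^'p) \<bullet> w = (\<Sum>a\<in>UNIV. v$a * w$a)"
  by (simp add: inner_vec_def)

lemma gram_entry: "(transpose X ** (X::real^'p^'n)) $ a $ b = (\<Sum>i\<in>UNIV. X$i$a * X$i$b)"
  by (simp add: matrix_matrix_mult_def transpose_def)

lemma gram_quad: "p \<bullet> ((transpose X ** (X::real^'p^'n)) *v q) = (\<Sum>i\<in>UNIV. (p \<bullet> X$i) * (q \<bullet> X$i))"
proof -
  have "p \<bullet> ((transpose X ** X) *v q) = (\<Sum>a\<in>UNIV. \<Sum>b\<in>UNIV. \<Sum>i\<in>UNIV. p$a * X$i$a * X$i$b * q$b)"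
    by (simp add: inner_real_vec matrix_vector_mult_def gram_entry sum_distrib_left sum_distrib_right mult_ac)
  also have "\<dots> = (\<Sum>a\<in>UNIV. \<Sum>i\<in>UNIV. \<Sum>b\<in>UNIV. p$a * X$i$a * X$i$b * q$b)"
    by (rule sum.cong[OF refl], rule sum.swap)
  also have "\<dots> = (\<Sum>i\<in>UNIV. \<Sum>a\<in>UNIV. \<Sum>b\<in>UNIV. p$a * X$i$a * X$i$b * q$b)"
    by (rule sum.swap)
  also have "\<dots> = (\<Sum>i\<in>UNIV. (p \<bullet> X$i) * (q \<bullet> X$i))"
    by (simp add: inner_real_vec sum_product mult_ac)
  finally show ?thesis .
qed

lemma inner_mv_transpose: "((A::real^'n^'m) *v x) \<bullet> y = x \<bullet> (transpose A *v y)"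
  by (metis dot_lmul_matrix vector_transpose_matrix)

lemma K_sym:
  fixes K G :: "real^'p^'p"
  assumes "transpose G = G" "K ** G = mat 1"
  shows "transpose K = K"
proof -
  have GK: "G ** transpose K = mat 1"
    using arg_cong[OF assms(2), of transpose] assms(1) by (simp add: matrix_transpose_mul transpose_mat)
  have "transpose K = (K ** G) ** transpose K" by (simp add: assms(2))
  also have "\<dots> = K ** (G ** transpose K)" by (simp add: matrix_mul_assoc)
  also have "\<dots> = K" by (simp add: GK)
  finally show ?thesis .
qed

lemma gram_sym: "transpose (transpose X ** (X::real^'p^'n)) = transpose X ** X"
  by (simp add: matrix_transpose_mul)

lemma Bsum:
  fixes K :: "real^'p^'p" and X :: "real^'p^'n"
  assumes KG: "K ** (transpose X ** X) = mat 1" and Ks: "transpose K = K"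
  shows "(\<Sum>i\<in>UNIV. (h \<bullet> (K *v X$i)) * (h' \<bullet> (K *v X$i))) = h \<bullet> (K *v h')"
proof -
  have c: "h \<bullet> (K *v g) = (K *v h) \<bullet> g" for h g :: "real^'p"
    by (metis inner_commute inner_mv_transpose Ks)
  have "(\<Sum>i\<in>UNIV. (h \<bullet> (K *v X$i)) * (h' \<bullet> (K *v X$i))) = (K *v h) \<bullet> ((transpose X ** X) *v (K *v h'))"
    unfolding c gram_quad ..
  also have "\<dots> = h \<bullet> (K *v ((transpose X ** X) *v (K *v h')))"
    by (simp add: inner_mv_transpose Ks)
  also have "\<dots> = h \<bullet> (K *v h')"
  proof -
    have "K *v ((transpose X ** X) *v v) = v" for v
      by (simp only: matrix_vector_mul_assoc KG matrix_vector_mul_lid)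
    then show ?thesis by simp
  qed
  finally show ?thesis .
qed

lemma KH_entry: "(K ** (transpose Y ** (Y::real^'p^'m))) $ a $ b = (\<Sum>j\<in>UNIV. (K *v Y$j)$a * Y$j$b)"
proof -
  have "(K ** (transpose Y ** Y)) $ a $ b = (\<Sum>c\<in>UNIV. \<Sum>j\<in>UNIV. K$a$c * Y$j$c * Y$j$b)"
    by (simp add: matrix_matrix_mult_def transpose_def sum_distrib_left mult_ac)
  also have "\<dots> = (\<Sum>j\<in>UNIV. \<Sum>c\<in>UNIV. K$a$c * Y$j$c * Y$j$b)" by (rule sum.swap)
  also have "\<dots> = (\<Sum>j\<in>UNIV. (K *v Y$j)$a * Y$j$b)"
    by (simp add: matrix_vector_mult_def sum_distrib_right)
  finally show ?thesis .
qed

lemma trace_KH: "mat_trace (K ** (transpose Y ** (Y::real^'p^'m))) = (\<Sum>j\<in>UNIV. Y$j \<bullet> (K *v Y$j))"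
proof -
  have "mat_trace (K ** (transpose Y ** Y)) = (\<Sum>a\<in>UNIV. \<Sum>j\<in>UNIV. (K *v Y$j)$a * Y$j$a)"
    unfolding mat_trace_def KH_entry ..
  also have "\<dots> = (\<Sum>j\<in>UNIV. \<Sum>a\<in>UNIV. (K *v Y$j)$a * Y$j$a)" by (rule sum.swap)
  also have "\<dots> = (\<Sum>j\<in>UNIV. Y$j \<bullet> (K *v Y$j))"
    by (simp add: inner_real_vec mult.commute)
  finally show ?thesis .
qed

lemma trace_KHKH: "mat_trace ((K ** (transpose Y ** (Y::real^'p^'m))) ** (K ** (transpose Y ** Y))) =
   (\<Sum>j\<in>UNIV. \<Sum>l\<in>UNIV. (Y$l \<bullet> (K *v Y$j)) * (Y$j \<bullet> (K *v Y$l)))"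
proof -
  let ?F = "\<lambda>a b j l. (K *v Y$j)$a * Y$j$b * ((K *v Y$l)$b * Y$l$a)"
  have tr2: "mat_trace (N ** N) = (\<Sum>a\<in>UNIV. \<Sum>b\<in>UNIV. N$a$b * N$b$a)" for N :: "real^'p^'p"
    by (simp add: mat_trace_def matrix_matrix_mult_def)
  have "mat_trace ((K ** (transpose Y ** Y)) ** (K ** (transpose Y ** Y))) =
     (\<Sum>a\<in>UNIV. \<Sum>b\<in>UNIV. \<Sum>j\<in>UNIV. \<Sum>l\<in>UNIV. ?F a b j l)"
    unfolding tr2 KH_entry sum_product ..
  also have "\<dots> = (\<Sum>a\<in>UNIV. \<Sum>j\<in>UNIV. \<Sum>b\<in>UNIV. \<Sum>l\<in>UNIV. ?F a b j l)"
    by (rule sum.cong[OF refl], rule sum.swap)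
  also have "\<dots> = (\<Sum>a\<in>UNIV. \<Sum>j\<in>UNIV. \<Sum>l\<in>UNIV. \<Sum>b\<in>UNIV. ?F a b j l)"
    by (rule sum.cong[OF refl], rule sum.cong[OF refl], rule sum.swap)
  also have "\<dots> = (\<Sum>j\<in>UNIV. \<Sum>a\<in>UNIV. \<Sum>l\<in>UNIV. \<Sum>b\<in>UNIV. ?F a b j l)"
    by (rule sum.swap)
  also have "\<dots> = (\<Sum>j\<in>UNIV. \<Sum>l\<in>UNIV. \<Sum>a\<in>UNIV. \<Sum>b\<in>UNIV. ?F a b j l)"
    by (rule sum.cong[OF refl], rule sum.swap)
  also have "\<dots> = (\<Sum>j\<in>UNIV. \<Sum>l\<in>UNIV. \<Sum>b\<in>UNIV. \<Sum>a\<in>UNIV. ?F a b j l)"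
    by (rule sum.cong[OF refl], rule sum.cong[OF refl], rule sum.swap)
  also have "\<dots> = (\<Sum>j\<in>UNIV. \<Sum>l\<in>UNIV. (Y$l \<bullet> (K *v Y$j)) * (Y$j \<bullet> (K *v Y$l)))"
    by (simp add: inner_real_vec sum_product mult_ac)
  finally show ?thesis .
qed

lemma lin_form: "h \<bullet> (K *v (transpose X *v v)) = (\<Sum>i\<in>UNIV. v$i * (h \<bullet> (K *v (X::real^'p^'n)$i)))"
proof -
  have "h \<bullet> (K *v (transpose X *v v)) = (\<Sum>a\<in>UNIV. \<Sum>b\<in>UNIV. \<Sum>i\<in>UNIV. h$a * K$a$b * X$i$b * v$i)"
    by (simp add: inner_real_vec matrix_vector_mult_def transpose_def sum_distrib_left mult_ac)
  also have "\<dots> = (\<Sum>a\<in>UNIV. \<Sum>i\<in>UNIV. \<Sum>b\<in>UNIV. h$a * K$a$b * X$i$b * v$i)"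
    by (rule sum.cong[OF refl], rule sum.swap)
  also have "\<dots> = (\<Sum>i\<in>UNIV. \<Sum>a\<in>UNIV. \<Sum>b\<in>UNIV. h$a * K$a$b * X$i$b * v$i)"
    by (rule sum.swap)
  also have "\<dots> = (\<Sum>i\<in>UNIV. v$i * (h \<bullet> (K *v X$i)))"
    by (simp add: inner_real_vec matrix_vector_mult_def sum_distrib_left mult_ac)
  finally show ?thesis .
qed

lemma residual:
  fixes X :: "real^'p^'n" and K :: "real^'p^'p"
  assumes KG: "K ** (transpose X ** X) = mat 1"
  shows "h \<bullet> (K *v (transpose X *v (\<chi> i. X$i \<bullet> \<beta> + \<sigma> * e i))) =
     h \<bullet> \<beta> + \<sigma> * (\<Sum>i\<in>UNIV. e i * (h \<bullet> (K *v X$i)))"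
proof -
  have v: "(\<chi> i. X$i \<bullet> \<beta> + \<sigma> * e i) = X *v \<beta> + \<sigma> *\<^sub>R (\<chi> i. e i)"
    by (simp add: vec_eq_iff matrix_vector_mul_component)
  have lin: "K *v (transpose X *v (X *v \<beta> + \<sigma> *\<^sub>R (\<chi> i. e i))) =
      \<beta> + \<sigma> *\<^sub>R (K *v (transpose X *v (\<chi> i. e i)))"
    by (simp add: matrix_vector_right_distrib matrix_vector_mul_assoc KG matrix_vector_mult_scaleR)
  show ?thesis
    unfolding v lin inner_add_right inner_scaleR_right lin_form by simp
qed




lemma meas_mmult[measurable (raw)]:
  fixes g :: "'a \<Rightarrow> real^'k::finite^'n::finite" and h :: "'a \<Rightarrow> real^'l::finite^'k"
  assumes [measurable]: "g \<in> borel_measurable M" "h \<in> borel_measurable M"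
  shows "(\<lambda>x. g x ** h x) \<in> borel_measurable M"
  unfolding matrix_matrix_mult_def by measurable

lemma meas_mvmult[measurable (raw)]:
  fixes g :: "'a \<Rightarrow> real^'k::finite^'n::finite" and h :: "'a \<Rightarrow> real^'k"
  assumes [measurable]: "g \<in> borel_measurable M" "h \<in> borel_measurable M"
  shows "(\<lambda>x. g x *v h x) \<in> borel_measurable M"
  unfolding matrix_vector_mult_def by measurable

lemma meas_transpose[measurable (raw)]:
  fixes g :: "'a \<Rightarrow> real^'k::finite^'n::finite"
  assumes [measurable]: "g \<in> borel_measurable M"
  shows "(\<lambda>x. transpose (g x)) \<in> borel_measurable M"
  unfolding transpose_def by measurable

lemma meas_design[measurable (raw)]:
  fixes z :: "'n::finite \<Rightarrow> 'a \<Rightarrow> real^'d::finite"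
  assumes [measurable]: "f \<in> borel_measurable borel" "\<And>i. z i \<in> borel_measurable M"
  shows "(\<lambda>x. design f (\<lambda>i. z i x)) \<in> borel_measurable M"
  unfolding design_def by measurable

lemma meas_trace[measurable (raw)]:
  fixes g :: "'a \<Rightarrow> real^'k::finite^'k"
  assumes [measurable]: "g \<in> borel_measurable M"
  shows "(\<lambda>x. mat_trace (g x)) \<in> borel_measurable M"
  unfolding mat_trace_def by measurable

definition Gw :: "(real^'d \<Rightarrow> real^'p) \<Rightarrow> ('n::finite + 'm::finite \<Rightarrow> (real^'d) \<times> real) \<Rightarrow> real^'p^'p" where
  "Gw f w = transpose (design f (\<lambda>i. fst (w (Inl i)))) ** design f (\<lambda>i. fst (w (Inl i)))"

definition Hw :: "(real^'d \<Rightarrow> real^'p) \<Rightarrow> ('n::finite + 'm::finite \<Rightarrow> (real^'d) \<times> real) \<Rightarrow> real^'p^'p" where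
  "Hw f w = transpose (design f (\<lambda>j. fst (w (Inr j)))) ** design f (\<lambda>j. fst (w (Inr j)))"

definition Ew :: "(real^'d \<Rightarrow> real^'p) \<Rightarrow> ('n::finite + 'm::finite \<Rightarrow> (real^'d) \<times> real) \<Rightarrow> real" where
  "Ew f w = (1 / real CARD('m)) * (\<Sum>j\<in>UNIV. (snd (w (Inr j)) - f (fst (w (Inr j))) \<bullet>
       (minv (Gw f w) *v (transpose (design f (\<lambda>i. fst (w (Inl i)))) *v (\<chi> i. snd (w (Inl i))))))\<^sup>2)"

definition Aw :: "(real^'d \<Rightarrow> real^'p) \<Rightarrow> ('n::finite + 'm::finite \<Rightarrow> (real^'d) \<times> real) \<Rightarrow> real^'p^'p" where
  "Aw f w = (real CARD('n) / real CARD('m)) *\<^sub>R (minv (Gw f w) ** Hw f w)"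

context
  fixes f :: "real^'d::finite \<Rightarrow> real^'p::finite"
  assumes fm[measurable]: "f \<in> borel_measurable borel"
begin

lemma meas_Gw[measurable]: "(Gw f :: ('n::finite + 'm::finite \<Rightarrow> (real^'d) \<times> real) \<Rightarrow> _) \<in> borel_measurable (PiM UNIV (\<lambda>_. borel))"
  unfolding Gw_def[abs_def] by measurable

lemma meas_Hw[measurable]: "(Hw f :: ('n::finite + 'm::finite \<Rightarrow> (real^'d) \<times> real) \<Rightarrow> _) \<in> borel_measurable (PiM UNIV (\<lambda>_. borel))"
  unfolding Hw_def[abs_def] by measurable

lemma meas_Ew[measurable]: "(Ew f :: ('n::finite + 'm::finite \<Rightarrow> (real^'d) \<times> real) \<Rightarrow> _) \<in> borel_measurable (PiM UNIV (\<lambda>_. borel))"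
  unfolding Ew_def[abs_def] by measurable

lemma meas_Aw[measurable]: "(Aw f :: ('n::finite + 'm::finite \<Rightarrow> (real^'d) \<times> real) \<Rightarrow> _) \<in> borel_measurable (PiM UNIV (\<lambda>_. borel))"
  unfolding Aw_def[abs_def] by measurable

end

context model
begin

definition Xd :: "('n + 'm \<Rightarrow> real^'d) \<Rightarrow> real^'p^'n" where "Xd xs = design f (\<lambda>i. xs (Inl i))"
definition Yd :: "('n + 'm \<Rightarrow> real^'d) \<Rightarrow> real^'p^'m" where "Yd xs = design f (\<lambda>j. xs (Inr j))"
definition Kd :: "('n + 'm \<Rightarrow> real^'d) \<Rightarrow> real^'p^'p" where "Kd xs = minv (transpose (Xd xs) ** Xd xs)"
definition tt :: "('n + 'm \<Rightarrow> real^'d) \<Rightarrow> real" where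
  "tt xs = mat_trace (Kd xs ** (transpose (Yd xs) ** Yd xs))"
definition ss :: "('n + 'm \<Rightarrow> real^'d) \<Rightarrow> real" where
  "ss xs = mat_trace ((Kd xs ** (transpose (Yd xs) ** Yd xs)) ** (Kd xs ** (transpose (Yd xs) ** Yd xs)))"

definition coef :: "('n + 'm \<Rightarrow> real^'d) \<Rightarrow> 'm \<Rightarrow> 'n + 'm \<Rightarrow> real" where
  "coef xs j k = (case k of Inl i \<Rightarrow> - (Yd xs $ j \<bullet> (Kd xs *v Xd xs $ i)) | Inr l \<Rightarrow> if l = j then 1 else 0)"

lemma Phi_fst: "fst (\<Phi> (xs, es) k) = xs k" and Phi_snd: "snd (\<Phi> (xs, es) k) = f (xs k) \<bullet> \<beta> + \<sigma> * es k"
  by (simp_all add: \<Phi>_def T_def)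

lemma Gw_Phi: "Gw f (\<Phi> (xs, es)) = transpose (Xd xs) ** Xd xs"
  by (simp add: Gw_def Xd_def Phi_fst)

lemma Hw_Phi: "Hw f (\<Phi> (xs, es)) = transpose (Yd xs) ** Yd xs"
  by (simp add: Hw_def Yd_def Phi_fst)

lemma trace_scale: "mat_trace (c *\<^sub>R N) = c * mat_trace (N::real^'q::finite^'q)"
  by (simp add: mat_trace_def sum_distrib_left)

lemma scale_mult: "(c *\<^sub>R N) ** (c *\<^sub>R N) = (c * c) *\<^sub>R (N ** (N::real^'q::finite^'q))"
  by (simp add: vec_eq_iff matrix_matrix_mult_def sum_distrib_left mult_ac)

lemma tA_Phi: "mat_trace (Aw f (\<Phi> (xs, es))) = (real CARD('n) / real CARD('m)) * tt xs"
  by (simp add: Aw_def Gw_Phi Hw_Phi trace_scale tt_def Kd_def)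

lemma tAA_Phi: "mat_trace (Aw f (\<Phi> (xs, es)) ** Aw f (\<Phi> (xs, es))) = (real CARD('n) / real CARD('m))\<^sup>2 * ss xs"
  unfolding Aw_def scale_mult by (simp add: Gw_Phi Hw_Phi trace_scale ss_def Kd_def power2_eq_square)

lemma sum_coef: "(\<Sum>k\<in>UNIV. coef xs j k * es k) = es (Inr j) - (\<Sum>i\<in>UNIV. (Yd xs $ j \<bullet> (Kd xs *v Xd xs $ i)) * es (Inl i))"
proof -
  have "(\<Sum>k\<in>UNIV. coef xs j k * es k) = (\<Sum>k\<in>UNIV <+> UNIV. coef xs j k * es k)"
    by (simp add: UNIV_Plus_UNIV)
  also have "\<dots> = (\<Sum>i\<in>UNIV. - (Yd xs $ j \<bullet> (Kd xs *v Xd xs $ i)) * es (Inl i)) + (\<Sum>l\<in>UNIV. (if l = j then 1 else 0) * es (Inr l))"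
    by (subst sum.Plus) (auto simp: coef_def)
  also have "\<dots> = es (Inr j) - (\<Sum>i\<in>UNIV. (Yd xs $ j \<bullet> (Kd xs *v Xd xs $ i)) * es (Inl i))"
    by (simp add: sum_negf if_distrib[of "\<lambda>x. x * _"] sum.delta cong: if_cong)
  finally show ?thesis .
qed

lemma Ew_Phi:
  assumes d: "det (transpose (Xd xs) ** Xd xs) \<noteq> 0"
  shows "Ew f (\<Phi> (xs, es)) = \<sigma>\<^sup>2 / real CARD('m) * (\<Sum>j\<in>UNIV. (\<Sum>k\<in>UNIV. coef xs j k * es k)\<^sup>2)"
proof -
  have KG: "Kd xs ** (transpose (Xd xs) ** Xd xs) = mat 1"
    unfolding Kd_def minv_eq[OF d, symmetric] by (rule matrix_inv_props(2)[OF d])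
  have y: "(\<chi> i. snd (\<Phi> (xs, es) (Inl i))) = (\<chi> i. Xd xs $ i \<bullet> \<beta> + \<sigma> * es (Inl i))"
    by (simp add: Phi_snd Xd_def design_def)
  have r: "snd (\<Phi> (xs, es) (Inr j)) - f (fst (\<Phi> (xs, es) (Inr j))) \<bullet>
       (Kd xs *v (transpose (Xd xs) *v (\<chi> i. snd (\<Phi> (xs, es) (Inl i)))))
     = \<sigma> * (\<Sum>k\<in>UNIV. coef xs j k * es k)" for j
  proof -
    have h: "f (xs (Inr j)) = Yd xs $ j" by (simp add: Yd_def design_def)
    show ?thesis
      unfolding y unfolding residual[OF KG] unfolding sum_coef Phi_fst Phi_snd h
      by (simp add: algebra_simps sum_distrib_left)
  qed
  have "Ew f (\<Phi> (xs, es)) = (1 / real CARD('m)) * (\<Sum>j\<in>UNIV. (\<sigma> * (\<Sum>k\<in>UNIV. coef xs j k * es k))\<^sup>2)"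
    unfolding Ew_def Gw_Phi r[symmetric] Kd_def by (simp add: Xd_def Phi_fst)
  also have "\<dots> = (1 / real CARD('m)) * (\<Sum>j\<in>UNIV. \<sigma>\<^sup>2 * (\<Sum>k\<in>UNIV. coef xs j k * es k)\<^sup>2)"
    by (simp only: power_mult_distrib)
  also have "\<dots> = (1 / real CARD('m)) * (\<sigma>\<^sup>2 * (\<Sum>j\<in>UNIV. (\<Sum>k\<in>UNIV. coef xs j k * es k)\<^sup>2))"
    by (simp only: sum_distrib_left[symmetric])
  also have "\<dots> = \<sigma>\<^sup>2 / real CARD('m) * (\<Sum>j\<in>UNIV. (\<Sum>k\<in>UNIV. coef xs j k * es k)\<^sup>2)"
    by simp
  finally show ?thesis .
qed

lemma KG_props:
  assumes d: "det (transpose (Xd xs) ** Xd xs) \<noteq> 0"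
  shows "Kd xs ** (transpose (Xd xs) ** Xd xs) = mat 1" "transpose (Kd xs) = Kd xs"
proof -
  show KG: "Kd xs ** (transpose (Xd xs) ** Xd xs) = mat 1"
    unfolding Kd_def minv_eq[OF d, symmetric] by (rule matrix_inv_props(2)[OF d])
  show "transpose (Kd xs) = Kd xs" by (rule K_sym[OF gram_sym KG])
qed

definition BB :: "('n + 'm \<Rightarrow> real^'d) \<Rightarrow> 'm \<Rightarrow> 'm \<Rightarrow> real" where
  "BB xs j l = Yd xs $ j \<bullet> (Kd xs *v Yd xs $ l)"

lemma coefdot:
  assumes d: "det (transpose (Xd xs) ** Xd xs) \<noteq> 0"
  shows "(\<Sum>k\<in>UNIV. coef xs j k * coef xs l k) = (if j = l then 1 else 0) + BB xs j l"
proof -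
  have "(\<Sum>k\<in>UNIV. coef xs j k * coef xs l k) = (\<Sum>k\<in>UNIV <+> UNIV. coef xs j k * coef xs l k)"
    by (simp add: UNIV_Plus_UNIV)
  also have "\<dots> = (\<Sum>i\<in>UNIV. (Yd xs $ j \<bullet> (Kd xs *v Xd xs $ i)) * (Yd xs $ l \<bullet> (Kd xs *v Xd xs $ i)))
      + (\<Sum>r\<in>UNIV. (if r = j then 1 else 0) * (if r = l then 1 else 0))"
    by (subst sum.Plus) (auto simp: coef_def)
  also have "\<dots> = BB xs j l + (if j = l then 1 else 0)"
    unfolding Bsum[OF KG_props[OF d]] BB_def by (simp add: if_distrib[of "\<lambda>x. x * _"] sum.delta cong: if_cong)
  finally show ?thesis by simp
qed

lemma BB_sym:
  assumes d: "det (transpose (Xd xs) ** Xd xs) \<noteq> 0"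
  shows "BB xs l j = BB xs j l"
  unfolding BB_def by (metis inner_commute inner_mv_transpose KG_props(2)[OF d])

lemma sum_BB: "(\<Sum>j\<in>UNIV. BB xs j j) = tt xs"
  unfolding tt_def trace_KH BB_def ..

lemma sum_BB2:
  assumes d: "det (transpose (Xd xs) ** Xd xs) \<noteq> 0"
  shows "(\<Sum>j\<in>UNIV. \<Sum>l\<in>UNIV. (BB xs j l)\<^sup>2) = ss xs"
  unfolding ss_def trace_KHKH
  using BB_sym[OF d] unfolding BB_def by (simp add: power2_eq_square)

lemma inner_E:
  assumes d: "det (transpose (Xd xs) ** Xd xs) \<noteq> 0"
  shows "(\<integral>es. Ew f (\<Phi> (xs, es)) \<partial>QQ) = \<sigma>\<^sup>2 / real CARD('m) * (real CARD('m) + tt xs)"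
    and "(\<integral>es. (Ew f (\<Phi> (xs, es)))\<^sup>2 \<partial>QQ) = (\<sigma>\<^sup>2 / real CARD('m))\<^sup>2 *
        ((real CARD('m) + tt xs)\<^sup>2 + 2 * (real CARD('m) + 2 * tt xs + ss xs))"
proof -
  have sq: "(\<Sum>k\<in>UNIV. (coef xs j k)\<^sup>2) = 1 + BB xs j j" for j
    using coefdot[OF d, of j j] by (simp add: power2_eq_square)
  have s1: "(\<Sum>j\<in>UNIV. \<Sum>k\<in>UNIV. (coef xs j k)\<^sup>2) = real CARD('m) + tt xs"
    unfolding sq sum.distrib sum_BB by simp
  show "(\<integral>es. Ew f (\<Phi> (xs, es)) \<partial>QQ) = \<sigma>\<^sup>2 / real CARD('m) * (real CARD('m) + tt xs)"
    unfolding Ew_Phi[OF d] integral_mult_right_zero G.quad_int(2) s1 ..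
  have "(\<integral>es. (Ew f (\<Phi> (xs, es)))\<^sup>2 \<partial>QQ) =
      (\<sigma>\<^sup>2 / real CARD('m))\<^sup>2 * (\<integral>es. (\<Sum>j\<in>UNIV. (\<Sum>k\<in>UNIV. coef xs j k * es k)\<^sup>2)\<^sup>2 \<partial>QQ)"
    unfolding Ew_Phi[OF d] power_mult_distrib integral_mult_right_zero ..
  also have "(\<integral>es. (\<Sum>j\<in>UNIV. (\<Sum>k\<in>UNIV. coef xs j k * es k)\<^sup>2)\<^sup>2 \<partial>QQ) =
      (\<Sum>j\<in>UNIV. \<Sum>l\<in>UNIV. (1 + BB xs j j) * (1 + BB xs l l) + 2 * ((if j = l then 1 else 0) + BB xs j l)\<^sup>2)"
    unfolding G.quart_int(2) sq coefdot[OF d] ..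
  also have "\<dots> = (real CARD('m) + tt xs)\<^sup>2 + 2 * (real CARD('m) + 2 * tt xs + ss xs)"
  proof -
    have a: "(\<Sum>j\<in>UNIV. \<Sum>l\<in>UNIV. (1 + BB xs j j) * (1 + BB xs l l)) = (real CARD('m) + tt xs)\<^sup>2"
      by (simp add: sum_product[symmetric] power2_eq_square sum.distrib sum_BB)
    have b: "((if j = l then 1 else 0) + BB xs j l)\<^sup>2 = (if j = l then 1 + 2 * BB xs j j else 0) + (BB xs j l)\<^sup>2" for j l
      by (auto simp: power2_eq_square algebra_simps)
    have c: "(\<Sum>j\<in>UNIV. \<Sum>l\<in>UNIV. ((if j = l then 1 else 0) + BB xs j l)\<^sup>2) = real CARD('m) + 2 * tt xs + ss xs"
      unfolding b sum.distrib sum_BB2[OF d]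
      by (simp add: sum.delta sum.distrib sum_distrib_left[symmetric] sum_BB)
    have e: "(\<Sum>j\<in>UNIV. \<Sum>l\<in>UNIV. (1 + BB xs j j) * (1 + BB xs l l) + 2 * ((if j = l then 1 else 0) + BB xs j l)\<^sup>2)
      = (\<Sum>j\<in>UNIV. \<Sum>l\<in>UNIV. (1 + BB xs j j) * (1 + BB xs l l)) + 2 * (\<Sum>j\<in>UNIV. \<Sum>l\<in>UNIV. ((if j = l then 1 else 0) + BB xs j l)\<^sup>2)"
      by (simp only: sum.distrib sum_distrib_left)
    show ?thesis unfolding e a c ..
  qed
  finally show "(\<integral>es. (Ew f (\<Phi> (xs, es)))\<^sup>2 \<partial>QQ) = (\<sigma>\<^sup>2 / real CARD('m))\<^sup>2 *
        ((real CARD('m) + tt xs)\<^sup>2 + 2 * (real CARD('m) + 2 * tt xs + ss xs))" .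
qed

end




lemma rank_gram:
  fixes X :: "real^'p::finite^'n::finite"
  assumes r: "rank X = CARD('p)"
  shows "det (transpose X ** X) \<noteq> 0"
proof
  assume "det (transpose X ** X) = 0"
  then have "rank (transpose X ** X) \<noteq> CARD('p)" by (simp add: det_eq_0_rank)
  then obtain v where v: "v \<noteq> 0" "(transpose X ** X) *v v = 0"
    using matrix_nonfull_linear_equations_eq by blast
  have "(X *v v) \<bullet> (X *v v) = v \<bullet> ((transpose X ** X) *v v)"
    by (simp add: inner_mv_transpose matrix_vector_mul_assoc)
  then have "X *v v = 0" using v by simp
  moreover have "inj ((*v) X)" using r by (simp add: full_rank_injective)
  ultimately show False using v by (metis injD matrix_vector_mult_0_right)
qed

lemma integral_const_prob: "prob_space N \<Longrightarrow> (\<integral>x. c \<partial>N) = (c::real)"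
  by (simp add: prob_space.prob_space)

lemma lin3:
  fixes g1 g2 g3 :: "'a \<Rightarrow> real"
  assumes "prob_space N" "integrable N g1" "integrable N g2" "integrable N g3"
  shows "(\<integral>x. a + b * g1 x + c * g2 x + d * g3 x \<partial>N) = a + b * (\<integral>x. g1 x \<partial>N) + c * (\<integral>x. g2 x \<partial>N) + d * (\<integral>x. g3 x \<partial>N)"
proof -
  interpret prob_space N by fact
  have ic: "integrable N (\<lambda>x. a)" by simp
  have i1: "integrable N (\<lambda>x. b * g1 x)" "integrable N (\<lambda>x. c * g2 x)" "integrable N (\<lambda>x. d * g3 x)"
    using assms by auto
  have "(\<integral>x. a + b * g1 x + c * g2 x + d * g3 x \<partial>N) =
     (\<integral>x. a \<partial>N) + (\<integral>x. b * g1 x \<partial>N) + (\<integral>x. c * g2 x \<partial>N) + (\<integral>x. d * g3 x \<partial>N)"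
    using ic i1 by (simp add: Bochner_Integration.integral_add)
  then show ?thesis by (simp add: prob_space)
qed

theorem proposition1:
  fixes M :: "'w measure"
    and f :: "real^'d \<Rightarrow> real^'p"
    and x :: "'n::finite \<Rightarrow> 'w \<Rightarrow> real^'d" and y :: "'n \<Rightarrow> 'w \<Rightarrow> real"
    and u :: "'m::finite \<Rightarrow> 'w \<Rightarrow> real^'d" and v :: "'m \<Rightarrow> 'w \<Rightarrow> real"
    and \<beta> :: "real^'p" and \<sigma> :: real
    and Fx :: "'w \<Rightarrow> real^'p^'n" and Fu :: "'w \<Rightarrow> real^'p^'m"
    and \<beta>hat :: "'w \<Rightarrow> real^'p" and Ehat :: "'w \<Rightarrow> real" and A :: "'w \<Rightarrow> real^'p^'p"
  assumes P: "prob_space M"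
    and np: "CARD('n) \<ge> CARD('p)"
    and f_meas: "f \<in> borel_measurable borel"
    and indep: "prob_space.indep_vars M (\<lambda>_. borel)
        (\<lambda>k \<omega>. case k of Inl i \<Rightarrow> (x i \<omega>, y i \<omega>) | Inr j \<Rightarrow> (u j \<omega>, v j \<omega>)) UNIV"
    and ident: "\<exists>D. (\<forall>i. distr M borel (\<lambda>\<omega>. (x i \<omega>, y i \<omega>)) = D)
                   \<and> (\<forall>j. distr M borel (\<lambda>\<omega>. (u j \<omega>, v j \<omega>)) = D)"
    and cond_x: "\<And>i. cond_normal M (x i) (y i) f \<beta> \<sigma>"
    and cond_u: "\<And>j. cond_normal M (u j) (v j) f \<beta> \<sigma>"
    and sigma_pos: "\<sigma> > 0"
    and Fx_def: "\<And>\<omega>. Fx \<omega> = design f (\<lambda>i. x i \<omega>)"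
    and Fu_def: "\<And>\<omega>. Fu \<omega> = design f (\<lambda>j. u j \<omega>)"
    and rank: "AE \<omega> in M. rank (Fx \<omega>) = CARD('p)"
    and bhat_def: "\<And>\<omega>. \<beta>hat \<omega> =
        matrix_inv (transpose (Fx \<omega>) ** Fx \<omega>) *v (transpose (Fx \<omega>) *v (\<chi> i. y i \<omega>))"
    and Ehat_def: "\<And>\<omega>. Ehat \<omega> =
        (1 / real CARD('m)) * (\<Sum>j\<in>UNIV. (v j \<omega> - f (u j \<omega>) \<bullet> \<beta>hat \<omega>)\<^sup>2)"
    and A_def: "\<And>\<omega>. A \<omega> = (real CARD('n) / real CARD('m)) *\<^sub>R
        (matrix_inv (transpose (Fx \<omega>) ** Fx \<omega>) ** (transpose (Fu \<omega>) ** Fu \<omega>))"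
    and int_E: "integrable M Ehat" and int_E2: "integrable M (\<lambda>\<omega>. (Ehat \<omega>)\<^sup>2)"
    and int_trA: "integrable M (\<lambda>\<omega>. mat_trace (A \<omega>))"
    and int_trA2: "integrable M (\<lambda>\<omega>. (mat_trace (A \<omega>))\<^sup>2)"
    and int_trAA: "integrable M (\<lambda>\<omega>. mat_trace (A \<omega> ** A \<omega>))"
  shows "Expect M Ehat = \<sigma>\<^sup>2 * (1 + (1 / real CARD('n)) * Expect M (\<lambda>\<omega>. mat_trace (A \<omega>)))
    \<and> Var M Ehat = \<sigma> ^ 4 * (2 / real CARD('m)
          + 4 / (real CARD('m) * real CARD('n)) * Expect M (\<lambda>\<omega>. mat_trace (A \<omega>))
          + 2 / (real CARD('n))\<^sup>2 * Expect M (\<lambda>\<omega>. mat_trace (A \<omega> ** A \<omega>))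
          + 1 / (real CARD('n))\<^sup>2 * Var M (\<lambda>\<omega>. mat_trace (A \<omega>)))"
proof -
  interpret model M f x y u v \<beta> \<sigma>
    using P f_meas indep ident cond_x sigma_pos by (simp add: model_def model_axioms_def)
  define n' where "n' = real CARD('n)"
  define m' where "m' = real CARD('m)"
  have n'pos: "n' > 0" and m'pos: "m' > 0" by (simp_all add: n'_def m'_def)
  note [measurable] = f_meas
  have Zfx: "Gw f (Zv \<omega>) = transpose (Fx \<omega>) ** Fx \<omega>" for \<omega>
    by (simp add: Gw_def Zv_def Z_def Fx_def)
  have ae_det: "AE \<omega> in M. det (transpose (Fx \<omega>) ** Fx \<omega>) \<noteq> 0"
    using rank by eventually_elim (rule rank_gram)
  have eqE: "Ehat \<omega> = Ew f (Zv \<omega>)" if d: "det (transpose (Fx \<omega>) ** Fx \<omega>) \<noteq> 0" for \<omega>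
  proof -
    have d': "det (transpose (design f (\<lambda>i. x i \<omega>)) ** design f (\<lambda>i. x i \<omega>)) \<noteq> 0"
      using d by (simp add: Fx_def)
    show ?thesis
      unfolding Ehat_def bhat_def Ew_def Gw_def
      by (simp add: Zv_def Z_def Fx_def minv_eq[OF d'] m'_def)
  qed
  have eqA: "A \<omega> = Aw f (Zv \<omega>)" if d: "det (transpose (Fx \<omega>) ** Fx \<omega>) \<noteq> 0" for \<omega>
  proof -
    have d': "det (transpose (design f (\<lambda>i. x i \<omega>)) ** design f (\<lambda>i. x i \<omega>)) \<noteq> 0"
      using d by (simp add: Fx_def)
    show ?thesis
      unfolding A_def Aw_def Gw_def Hw_def
      by (simp add: Zv_def Z_def Fx_def Fu_def minv_eq[OF d'])
  qed
  have aeE: "AE \<omega> in M. Ehat \<omega> = Ew f (Zv \<omega>)" using ae_det by eventually_elim (rule eqE)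
  have aeA: "AE \<omega> in M. A \<omega> = Aw f (Zv \<omega>)" using ae_det by eventually_elim (rule eqA)
  have mE: "(\<lambda>\<omega>. Ew f (Zv \<omega>)) \<in> borel_measurable M" by measurable
  have mA: "(\<lambda>\<omega>. mat_trace (Aw f (Zv \<omega>))) \<in> borel_measurable M" by measurable
  have mA2: "(\<lambda>\<omega>. (mat_trace (Aw f (Zv \<omega>)))\<^sup>2) \<in> borel_measurable M" by measurable
  have mAA: "(\<lambda>\<omega>. mat_trace (Aw f (Zv \<omega>) ** Aw f (Zv \<omega>))) \<in> borel_measurable M" by measurable
  have mE2: "(\<lambda>\<omega>. (Ew f (Zv \<omega>))\<^sup>2) \<in> borel_measurable M" by measurable
  have c1: "integrable M (\<lambda>\<omega>. Ew f (Zv \<omega>))"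
    using int_E by (subst integrable_cong_AE[OF mE borel_measurable_integrable[OF int_E]]) (use aeE in auto)
  have c2: "integrable M (\<lambda>\<omega>. (Ew f (Zv \<omega>))\<^sup>2)"
    using int_E2 by (subst integrable_cong_AE[OF mE2 borel_measurable_integrable[OF int_E2]]) (use aeE in auto)
  have c3: "integrable M (\<lambda>\<omega>. mat_trace (Aw f (Zv \<omega>)))"
    using int_trA by (subst integrable_cong_AE[OF mA borel_measurable_integrable[OF int_trA]]) (use aeA in auto)
  have c4: "integrable M (\<lambda>\<omega>. (mat_trace (Aw f (Zv \<omega>)))\<^sup>2)"
    using int_trA2 by (subst integrable_cong_AE[OF mA2 borel_measurable_integrable[OF int_trA2]]) (use aeA in auto)
  have c5: "integrable M (\<lambda>\<omega>. mat_trace (Aw f (Zv \<omega>) ** Aw f (Zv \<omega>)))"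
    using int_trAA by (subst integrable_cong_AE[OF mAA borel_measurable_integrable[OF int_trAA]]) (use aeA in auto)
  have e1: "Expect M Ehat = (\<integral>\<omega>. Ew f (Zv \<omega>) \<partial>M)"
    unfolding Expect_def by (rule integral_cong_AE[OF borel_measurable_integrable[OF int_E] mE aeE])
  have e2: "(\<integral>\<omega>. (Ehat \<omega>)\<^sup>2 \<partial>M) = (\<integral>\<omega>. (Ew f (Zv \<omega>))\<^sup>2 \<partial>M)"
    by (rule integral_cong_AE[OF borel_measurable_integrable[OF int_E2] mE2]) (use aeE in auto)
  have e3: "Expect M (\<lambda>\<omega>. mat_trace (A \<omega>)) = (\<integral>\<omega>. mat_trace (Aw f (Zv \<omega>)) \<partial>M)"
    unfolding Expect_def by (rule integral_cong_AE[OF borel_measurable_integrable[OF int_trA] mA]) (use aeA in auto)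
  have e4: "(\<integral>\<omega>. (mat_trace (A \<omega>))\<^sup>2 \<partial>M) = (\<integral>\<omega>. (mat_trace (Aw f (Zv \<omega>)))\<^sup>2 \<partial>M)"
    by (rule integral_cong_AE[OF borel_measurable_integrable[OF int_trA2] mA2]) (use aeA in auto)
  have e5: "Expect M (\<lambda>\<omega>. mat_trace (A \<omega> ** A \<omega>)) = (\<integral>\<omega>. mat_trace (Aw f (Zv \<omega>) ** Aw f (Zv \<omega>)) \<partial>M)"
    unfolding Expect_def by (rule integral_cong_AE[OF borel_measurable_integrable[OF int_trAA] mAA]) (use aeA in auto)
  have aeX: "AE xs in Pmu. det (transpose (Xd xs) ** Xd xs) \<noteq> 0"
  proof (rule AE_transfer[where P="\<lambda>w. det (Gw f w) \<noteq> 0"])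
    show "{w \<in> space (PiM UNIV (\<lambda>_. borel)). det (Gw f w) \<noteq> 0} \<in> sets (PiM UNIV (\<lambda>_. borel))"
      by measurable
    show "AE \<omega> in M. det (Gw f (Zv \<omega>)) \<noteq> 0" using ae_det by (simp add: Zfx)
  qed (simp add: Gw_Phi)
  have pQ: "prob_space QQ" by (rule prob_QQ)
  note t1 = transfer[of "Ew f", OF meas_Ew[OF f_meas] c1]
  note t2 = transfer[of "\<lambda>w. (Ew f w)\<^sup>2", OF _ c2]
  note t3 = transfer[of "\<lambda>w. mat_trace (Aw f w)", OF _ c3]
  note t4 = transfer[of "\<lambda>w. (mat_trace (Aw f w))\<^sup>2", OF _ c4]
  note t5 = transfer[of "\<lambda>w. mat_trace (Aw f w ** Aw f w)", OF _ c5]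
  have i3: "(\<integral>es. mat_trace (Aw f (\<Phi> (xs, es))) \<partial>QQ) = n' / m' * tt xs" for xs
    unfolding tA_Phi integral_const_prob[OF pQ] n'_def m'_def ..
  have i4: "(\<integral>es. (mat_trace (Aw f (\<Phi> (xs, es))))\<^sup>2 \<partial>QQ) = (n' / m')\<^sup>2 * (tt xs)\<^sup>2" for xs
    unfolding tA_Phi integral_const_prob[OF pQ] n'_def m'_def by (simp add: power2_eq_square)
  have i5: "(\<integral>es. mat_trace (Aw f (\<Phi> (xs, es)) ** Aw f (\<Phi> (xs, es))) \<partial>QQ) = (n' / m')\<^sup>2 * ss xs" for xs
    unfolding tAA_Phi integral_const_prob[OF pQ] n'_def m'_def ..
  have It_int: "integrable Pmu tt"
  proof -
    have "integrable Pmu (\<lambda>xs. n' / m' * tt xs)" using t3(2)[OF meas_trace[OF meas_Aw[OF f_meas]]] unfolding i3 .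
    then show ?thesis using n'pos m'pos unfolding integrable_mult_left_iff by simp
  qed
  have It2_int: "integrable Pmu (\<lambda>xs. (tt xs)\<^sup>2)"
  proof -
    have "integrable Pmu (\<lambda>xs. (n' / m')\<^sup>2 * (tt xs)\<^sup>2)"
      using t4(2)[OF meas_trace[OF meas_Aw[OF f_meas], THEN borel_measurable_power]] unfolding i4 .
    then show ?thesis using n'pos m'pos unfolding integrable_mult_left_iff by simp
  qed
  have Iss_int: "integrable Pmu ss"
  proof -
    have "integrable Pmu (\<lambda>xs. (n' / m')\<^sup>2 * ss xs)"
      using t5(2)[OF meas_trace[OF meas_mmult[OF meas_Aw[OF f_meas] meas_Aw[OF f_meas]]]] unfolding i5 .
    then show ?thesis using n'pos m'pos unfolding integrable_mult_left_iff by simp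
  qed
  have mtt[measurable]: "tt \<in> borel_measurable Pmu" by (rule borel_measurable_integrable[OF It_int])
  have mss[measurable]: "ss \<in> borel_measurable Pmu" by (rule borel_measurable_integrable[OF Iss_int])
  define It where "It = (\<integral>xs. tt xs \<partial>Pmu)"
  define It2 where "It2 = (\<integral>xs. (tt xs)\<^sup>2 \<partial>Pmu)"
  define Iss where "Iss = (\<integral>xs. ss xs \<partial>Pmu)"
  have pP: "prob_space Pmu" by (rule prob_Pmu)
  have EE: "Expect M Ehat = \<sigma>\<^sup>2 / m' * (m' + It)"
  proof -
    have "Expect M Ehat = (\<integral>xs. \<sigma>\<^sup>2 / m' * (m' + tt xs) \<partial>Pmu)"
      unfolding e1 t1(1)
    proof (rule integral_cong_AE)
      show "(\<lambda>xs. \<integral>es. Ew f (\<Phi> (xs, es)) \<partial>QQ) \<in> borel_measurable Pmu"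
        by (rule borel_measurable_integrable[OF t1(2)])
      show "(\<lambda>xs. \<sigma>\<^sup>2 / m' * (m' + tt xs)) \<in> borel_measurable Pmu" by measurable
      show "AE xs in Pmu. (\<integral>es. Ew f (\<Phi> (xs, es)) \<partial>QQ) = \<sigma>\<^sup>2 / m' * (m' + tt xs)"
        using aeX by eventually_elim (simp add: inner_E(1) m'_def)
    qed
    also have "\<dots> = (\<integral>xs. \<sigma>\<^sup>2 + \<sigma>\<^sup>2 / m' * tt xs + 0 * tt xs + 0 * tt xs \<partial>Pmu)"
      using m'pos by (intro Bochner_Integration.integral_cong) (auto simp: field_simps)
    also have "\<dots> = \<sigma>\<^sup>2 / m' * (m' + It)"
      unfolding lin3[OF pP It_int It_int It_int] It_def using m'pos by (simp add: field_simps)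
    finally show ?thesis .
  qed
  have EE2: "(\<integral>\<omega>. (Ehat \<omega>)\<^sup>2 \<partial>M) = (\<sigma>\<^sup>2 / m')\<^sup>2 * (m'\<^sup>2 + 2 * m' + (2 * m' + 4) * It + It2 + 2 * Iss)"
  proof -
    have "(\<integral>\<omega>. (Ehat \<omega>)\<^sup>2 \<partial>M) = (\<integral>xs. (\<sigma>\<^sup>2 / m')\<^sup>2 * ((m' + tt xs)\<^sup>2 + 2 * (m' + 2 * tt xs + ss xs)) \<partial>Pmu)"
      unfolding e2 t2(1)[OF meas_Ew[OF f_meas, THEN borel_measurable_power]]
    proof (rule integral_cong_AE)
      show "(\<lambda>xs. \<integral>es. (Ew f (\<Phi> (xs, es)))\<^sup>2 \<partial>QQ) \<in> borel_measurable Pmu"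
        by (rule borel_measurable_integrable[OF t2(2)[OF meas_Ew[OF f_meas, THEN borel_measurable_power]]])
      show "(\<lambda>xs. (\<sigma>\<^sup>2 / m')\<^sup>2 * ((m' + tt xs)\<^sup>2 + 2 * (m' + 2 * tt xs + ss xs))) \<in> borel_measurable Pmu"
        by measurable
      show "AE xs in Pmu. (\<integral>es. (Ew f (\<Phi> (xs, es)))\<^sup>2 \<partial>QQ) = (\<sigma>\<^sup>2 / m')\<^sup>2 * ((m' + tt xs)\<^sup>2 + 2 * (m' + 2 * tt xs + ss xs))"
        using aeX by eventually_elim (simp add: inner_E(2) m'_def)
    qed
    also have "\<dots> = (\<integral>xs. (\<sigma>\<^sup>2 / m')\<^sup>2 * (m'\<^sup>2 + 2 * m') + ((\<sigma>\<^sup>2 / m')\<^sup>2 * (2 * m' + 4)) * tt xs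
         + (\<sigma>\<^sup>2 / m')\<^sup>2 * (tt xs)\<^sup>2 + (2 * (\<sigma>\<^sup>2 / m')\<^sup>2) * ss xs \<partial>Pmu)"
      using m'pos by (intro Bochner_Integration.integral_cong) (auto simp: power2_eq_square field_simps)
    also have "\<dots> = (\<sigma>\<^sup>2 / m')\<^sup>2 * (m'\<^sup>2 + 2 * m' + (2 * m' + 4) * It + It2 + 2 * Iss)"
      unfolding lin3[OF pP It_int It2_int Iss_int] It_def It2_def Iss_def by (simp add: algebra_simps)
    finally show ?thesis .
  qed
  have ET: "Expect M (\<lambda>\<omega>. mat_trace (A \<omega>)) = n' / m' * It"
    unfolding e3 t3(1)[OF meas_trace[OF meas_Aw[OF f_meas]]] i3 It_def by simp
  have ET2: "(\<integral>\<omega>. (mat_trace (A \<omega>))\<^sup>2 \<partial>M) = (n' / m')\<^sup>2 * It2"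
    unfolding e4 t4(1)[OF meas_trace[OF meas_Aw[OF f_meas], THEN borel_measurable_power]] i4 It2_def by simp
  have ETT: "Expect M (\<lambda>\<omega>. mat_trace (A \<omega> ** A \<omega>)) = (n' / m')\<^sup>2 * Iss"
    unfolding e5 t5(1)[OF meas_trace[OF meas_mmult[OF meas_Aw[OF f_meas] meas_Aw[OF f_meas]]]] i5 Iss_def by simp
  have VE: "Var M Ehat = (\<integral>\<omega>. (Ehat \<omega>)\<^sup>2 \<partial>M) - (Expect M Ehat)\<^sup>2"
    unfolding Var_def Expect_def by (rule variance_eq[OF int_E int_E2])
  have VT: "Var M (\<lambda>\<omega>. mat_trace (A \<omega>)) = (\<integral>\<omega>. (mat_trace (A \<omega>))\<^sup>2 \<partial>M) - (Expect M (\<lambda>\<omega>. mat_trace (A \<omega>)))\<^sup>2"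
    unfolding Var_def Expect_def by (rule variance_eq[OF int_trA int_trA2])
  show ?thesis
    unfolding VE VT EE EE2 ET ET2 ETT n'_def[symmetric] m'_def[symmetric]
    using n'pos m'pos by (simp add: field_simps power2_eq_square power4_eq_xxxx)
qed



end
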